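(* Let $n\ge3$. The bipyramid $BP_n$ admits a $z$-orientation for which every face is of type I, every zigzag is homogeneous, the edges of type II are exactly the base edges $i(i+1)$ (forming a directed cycle), and the vertices of type I are exactly $a$ and $b$. Moreover: if $n$ is odd, any two consecutive base edges form a special pair, and any two special pairs with no common edge are concordant; if $n=2k$ with $k$ odd, for consecutive base edges $c,c'$ the edge $c$ occurs twice in one of the two zigzags of this $z$-orientation and $c'$ occurs twice in the other; if $n=2k$ with $k$ even, for consecutive base edges $c,c'$ the edge $c$ occurs once in each of two of the four zigzags and $c'$ occurs once in each of the other two.
   Context: The $n$-gonal bipyramid $BP_n$ ($n\ge3$) is the triangulation of the sphere with vertices $1,\dots,n,a,b$, edges $i(i+1)$ (indices mod $n$, the base), $ai$ and $bi$, and faces $\{a,i,i+1\}$, $\{b,i,i+1\}$. A zigzag is a sequence of edges $(e_i)$ such that $e_i,e_{i+1}$ are distinct edges of a common face, the face containing $e_i,e_{i+1}$ differs from that containing $e_{i+1},e_{i+2}$, and $e_i,e_{i+2}$ have no common vertex; it is a cyclic sequence passing through its edges in definite directions, and its reversal is a zigzag. A $z$-orientation is a set of zigzags containing exactly one of $Z,Z^{-1}$ for each zigzag $Z$. Each edge is passed twice in total by the zigzags of a $z$-orientation; it is of type I if the two passages have opposite directions, of type II (directed accordingly) otherwise. A vertex is of type I if all its edges are of type I. A face is of type I if it contains exactly two edges of type I. When all faces are of type I, a zigzag is homogeneous if it is a cyclic sequence $e_1,e_1',e_1'',\dots,e_m,e_m',e_m''$ with the $e_i$ of type II and the $e_i',e_i''$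 of type I. In a $z$-knotted triangulation (exactly one zigzag up to reversal) with such a $z$-orientation, a special pair is a pair of distinct type II edges $c_1,c_2$ with a common vertex such that the zigzag is a cyclic sequence $c_1,\dots,c_2,\dots,c_1,\dots,c_2,\dots$; special pairs $c_1,c_2$ and $t_1,t_2$ are concordant if $c_i\ne t_j$ for all $i,j$ and the zigzag is a cyclic sequence of the form $c_1,\dots,t_1,\dots,c_2,\dots,t_2,\dots,c_1,\dots,t_1,\dots,c_2,\dots,t_2,\dots$. *)

theory Defs
  imports Main
begin

text \<open>A triangulation is represented by its set of faces F (each face a 3-element
vertex set). Edges are the 2-element subsets of faces.\<close>

definition tri_edges :: "'v set set \<Rightarrow> 'v set set" where
  "tri_edges F = {e. card e = 2 \<and> (\<exists>f\<in>F. e \<subseteq> f)}"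

definition tri_vertices :: "'v set set \<Rightarrow> 'v set" where
  "tri_vertices F = \<Union>F"

text \<open>A zigzag is a cyclic sequence of edges; we represent a cyclic sequence by a
list (indices taken modulo its length) which is primitive (not a proper power), and the
zigzag itself by the set of all rotations of such a list.\<close>

definition is_zz_list :: "'v set set \<Rightarrow> 'v set list \<Rightarrow> bool" where
  "is_zz_list F es \<longleftrightarrow> es \<noteq> [] \<and>
     (\<forall>i<length es.
        let m = length es; e0 = es ! i; e1 = es ! ((i+1) mod m); e2 = es ! ((i+2) mod m)
        in e0 \<in> tri_edges F \<and> e1 \<in> tri_edges F \<and> e0 \<noteq> e1 \<and>
           (\<exists>f\<in>F. e0 \<union> e1 \<subseteq> f) \<and>
           e0 \<union> e1 \<noteq> e1 \<union> e2 \<and>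
           e0 \<inter> e2 = {}) \<and>
     (\<forall>d. 0 < d \<and> d < length es \<longrightarrow> rotate d es \<noteq> es)"

definition zz_class :: "'a list \<Rightarrow> 'a list set" where
  "zz_class es = {rotate k es | k. True}"

definition zigzags :: "'v set set \<Rightarrow> 'v set list set set" where
  "zigzags F = {zz_class es | es. is_zz_list F es}"

definition zz_rev :: "'a list set \<Rightarrow> 'a list set" where
  "zz_rev Z = rev ` Z"

definition z_orientation :: "'v set set \<Rightarrow> 'v set list set set \<Rightarrow> bool" where
  "z_orientation F ZO \<longleftrightarrow> ZO \<subseteq> zigzags F \<and>
     (\<forall>Z\<in>zigzags F. (Z \<in> ZO \<or> zz_rev Z \<in> ZO) \<and>
                      (Z \<noteq> zz_rev Z \<longrightarrow> \<not> (Z \<in> ZO \<and> zz_rev Z \<in> ZO)))"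

definition zz_rep :: "'a list set \<Rightarrow> 'a list" where
  "zz_rep Z = (SOME es. es \<in> Z)"

text \<open>Number of passages of the edge {u,v} in direction u to v along a list: the i-th edge
is passed towards its vertex shared with the next edge.\<close>
definition passes_list :: "'v set list \<Rightarrow> 'v \<Rightarrow> 'v \<Rightarrow> nat" where
  "passes_list es u v = card {i. i < length es \<and> es ! i = {u, v} \<and>
      v \<in> es ! ((i+1) mod length es) \<and> u \<notin> es ! ((i+1) mod length es)}"

definition passes :: "'v set list set set \<Rightarrow> 'v \<Rightarrow> 'v \<Rightarrow> nat" where
  "passes ZO u v = (\<Sum>Z\<in>ZO. passes_list (zz_rep Z) u v)"

definition zz_occ :: "'a list set \<Rightarrow> 'a \<Rightarrow> nat" where
  "zz_occ Z e = card {i. i < length (zz_rep Z) \<and> zz_rep Z ! i = e}"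

definition typeI_edge :: "'v set set \<Rightarrow> 'v set list set set \<Rightarrow> 'v set \<Rightarrow> bool" where
  "typeI_edge F ZO e \<longleftrightarrow> e \<in> tri_edges F \<and>
     (\<exists>u v. e = {u, v} \<and> passes ZO u v > 0 \<and> passes ZO v u > 0)"

definition typeII_edge :: "'v set set \<Rightarrow> 'v set list set set \<Rightarrow> 'v set \<Rightarrow> bool" where
  "typeII_edge F ZO e \<longleftrightarrow> e \<in> tri_edges F \<and> \<not> typeI_edge F ZO e"

definition typeII_dir :: "'v set set \<Rightarrow> 'v set list set set \<Rightarrow> 'v \<Rightarrow> 'v \<Rightarrow> bool" where
  "typeII_dir F ZO u v \<longleftrightarrow> typeII_edge F ZO {u, v} \<and> passes ZO u v > 0"

definition typeI_vertex :: "'v set set \<Rightarrow> 'v set list set set \<Rightarrow> 'v \<Rightarrow> bool" where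
  "typeI_vertex F ZO x \<longleftrightarrow> x \<in> tri_vertices F \<and>
     (\<forall>e\<in>tri_edges F. x \<in> e \<longrightarrow> typeI_edge F ZO e)"

definition typeI_face :: "'v set set \<Rightarrow> 'v set list set set \<Rightarrow> 'v set \<Rightarrow> bool" where
  "typeI_face F ZO f \<longleftrightarrow> f \<in> F \<and>
     card {e \<in> tri_edges F. e \<subseteq> f \<and> typeI_edge F ZO e} = 2"

definition homogeneous :: "'v set set \<Rightarrow> 'v set list set set \<Rightarrow> 'v set list set \<Rightarrow> bool" where
  "homogeneous F ZO Z \<longleftrightarrow> (\<exists>es\<in>Z. length es mod 3 = 0 \<and>
     (\<forall>i<length es. (typeII_edge F ZO (es ! i) \<longleftrightarrow> i mod 3 = 0) \<and>
                     (i mod 3 \<noteq> 0 \<longrightarrow> typeI_edge F ZO (es ! i))))"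

definition special_pair :: "'v set set \<Rightarrow> 'v set list set set \<Rightarrow> 'v set \<Rightarrow> 'v set \<Rightarrow> bool" where
  "special_pair F ZO c1 c2 \<longleftrightarrow> c1 \<noteq> c2 \<and> typeII_edge F ZO c1 \<and> typeII_edge F ZO c2 \<and>
     c1 \<inter> c2 \<noteq> {} \<and>
     (\<exists>Z. ZO = {Z} \<and> (\<exists>es\<in>Z. \<exists>i1 i2 i3 i4. i1 < i2 \<and> i2 < i3 \<and> i3 < i4 \<and> i4 < length es \<and>
        es ! i1 = c1 \<and> es ! i2 = c2 \<and> es ! i3 = c1 \<and> es ! i4 = c2))"

definition concordant :: "'v set list set set \<Rightarrow> 'v set \<Rightarrow> 'v set \<Rightarrow> 'v set \<Rightarrow> 'v set \<Rightarrow> bool" where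
  "concordant ZO c1 c2 t1 t2 \<longleftrightarrow> c1 \<noteq> t1 \<and> c1 \<noteq> t2 \<and> c2 \<noteq> t1 \<and> c2 \<noteq> t2 \<and>
     (\<exists>Z. ZO = {Z} \<and> (\<exists>es\<in>Z. \<exists>j::nat \<Rightarrow> nat. strict_mono_on {0..7} j \<and> j 7 < length es \<and>
        es ! j 0 = c1 \<and> es ! j 1 = t1 \<and> es ! j 2 = c2 \<and> es ! j 3 = t2 \<and>
        es ! j 4 = c1 \<and> es ! j 5 = t1 \<and> es ! j 6 = c2 \<and> es ! j 7 = t2))"

datatype bp_vertex = Base nat | TopA | TopB

definition nxt :: "nat \<Rightarrow> nat \<Rightarrow> nat" where
  "nxt n i = i mod n + 1"

definition BP :: "nat \<Rightarrow> bp_vertex set set" where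
  "BP n = {{TopA, Base i, Base (nxt n i)} | i. i \<in> {1..n}} \<union>
          {{TopB, Base i, Base (nxt n i)} | i. i \<in> {1..n}}"

definition base_edge :: "nat \<Rightarrow> nat \<Rightarrow> bp_vertex set" where
  "base_edge n i = {Base i, Base (nxt n i)}"

end

theory Submission
  imports Defs
begin

locale bp = fixes n :: nat assumes n3: "3 \<le> n"
begin

definition bv :: "int \<Rightarrow> bp_vertex" where "bv x = Base (nat (x mod int n) + 1)"
definition ap :: "bool \<Rightarrow> bp_vertex" where "ap b = (if b then TopA else TopB)"
definition E :: "int \<Rightarrow> bp_vertex set" where "E x = {bv x, bv (x+1)}"
definition fc :: "bool \<Rightarrow> int \<Rightarrow> bp_vertex set" where "fc T j = {ap T, bv j, bv (j+1)}"

lemma npos: "int n > 0" using n3 by simp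

lemma bv_eq: "bv x = bv y \<longleftrightarrow> int n dvd (x - y)"
proof -
  have "bv x = bv y \<longleftrightarrow> x mod int n = y mod int n"
    unfolding bv_def using npos by (simp add: nat_eq_iff)
  also have "\<dots> \<longleftrightarrow> int n dvd (x - y)" by (simp add: mod_eq_dvd_iff)
  finally show ?thesis .
qed

lemma ndvd_small: "int n dvd k \<Longrightarrow> k = 0 \<or> k \<le> - 3 \<or> k \<ge> 3"
proof -
  assume "int n dvd k"
  then obtain c where c: "k = int n * c" by (auto elim: dvdE)
  consider "c = 0" | "c \<ge> 1" | "c \<le> -1" by linarith
  then show ?thesis
  proof cases
    case 2 then have "int n * c \<ge> int n * 1" by (intro mult_left_mono) auto
    then show ?thesis using c n3 by linarith
  next
    case 3 then have "int n * c \<le> int n * (-1)" by (intro mult_left_mono) auto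
    then show ?thesis using c n3 by linarith
  qed (simp add: c)
qed

lemma ndvd1[simp]: "\<not> int n dvd 1" "\<not> int n dvd 2" "\<not> int n dvd -1" "\<not> int n dvd -2"
  using ndvd_small[of 1] ndvd_small[of 2] ndvd_small[of "-1"] ndvd_small[of "-2"] by auto

lemma bv_ap[simp]: "bv x \<noteq> ap T" "ap T \<noteq> bv x"
  by (auto simp: bv_def ap_def)

lemma ap_eq[simp]: "ap T = ap T' \<longleftrightarrow> T = T'" by (auto simp: ap_def)

lemma bv_int: "bv (int i) = Base (i mod n + 1)"
  unfolding bv_def by (simp add: nat_mod_as_int[symmetric] zmod_int[symmetric] nat_int)

end

context bp begin

lemma n_ne[simp]: "n \<noteq> Suc 0" "n \<noteq> 0" "n \<noteq> 2" "n \<noteq> 1" using n3 by auto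

lemma base_bv: "i \<in> {1..n} \<Longrightarrow> Base i = bv (int i - 1)"
  unfolding bv_def by (auto simp: nat_diff_distrib)

lemma nxt_bv: "Base (nxt n i) = bv (int i)"
  by (simp add: bv_int nxt_def)

lemma bv_cong: "int n dvd (x - y) \<Longrightarrow> bv x = bv y" by (simp add: bv_eq)

lemma nat_mod_lt: "Suc (nat (x mod int n)) \<le> n"
  using npos by (simp add: Suc_le_eq nat_less_iff)

lemma bv_range: "\<exists>i\<in>{1..n}. bv x = Base i"
  unfolding bv_def using npos
  by (intro bexI[of _ "nat (x mod int n) + 1"]) (auto simp: nat_mod_lt)

lemma BP_eq: "BP n = {fc T j | T j. True}"
proof (intro set_eqI iffI)
  fix f assume "f \<in> BP n"
  then obtain i T where i: "i \<in> {1..n}" and f: "f = {ap T, Base i, Base (nxt n i)}"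
  proof -
    assume r: "\<And>i T. i \<in> {1..n} \<Longrightarrow> f = {ap T, Base i, Base (nxt n i)} \<Longrightarrow> thesis"
    from \<open>f \<in> BP n\<close> consider i where "i \<in> {1..n}" "f = {TopA, Base i, Base (nxt n i)}"
      | i where "i \<in> {1..n}" "f = {TopB, Base i, Base (nxt n i)}" unfolding BP_def by blast
    then show thesis
    proof cases
      case 1 then show ?thesis using r[of i True] by (simp add: ap_def)
    next
      case 2 then show ?thesis using r[of i False] by (simp add: ap_def)
    qed
  qed
  have "f = fc T (int i - 1)" unfolding fc_def f base_bv[OF i] nxt_bv by simp
  then show "f \<in> {fc T j | T j. True}" by blast
next
  fix f assume "f \<in> {fc T j | T j. True}"
  then obtain T j where f: "f = fc T j" by blast
  define i where "i = nat (j mod int n) + 1"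
  have i: "i \<in> {1..n}" unfolding i_def using nat_mod_lt by auto
  have 1: "bv j = Base i" unfolding i_def bv_def by simp
  have 2: "bv (j+1) = Base (nxt n i)" unfolding nxt_bv i_def
    by (rule bv_cong) (use npos in \<open>simp add: mod_eq_dvd_iff[symmetric] mod_add_left_eq\<close>)
  have "f = {ap T, Base i, Base (nxt n i)}" unfolding f fc_def 1 2 ..
  then show "f \<in> BP n" using i unfolding BP_def ap_def by (cases T) auto
qed

lemma fc_in[simp]: "fc T j \<in> BP n" unfolding BP_eq by blast

lemma fc_cong: "int n dvd (j - j') \<Longrightarrow> fc T j = fc T j'"
  unfolding fc_def using bv_cong[of j j'] bv_cong[of "j+1" "j'+1"] by simp

lemma int_simps[simp]: "(x::int) - (x + a) = - a" "x + a - x = a" "x + a - (x + b) = a - b" by simp_all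

lemma bv_ne1[simp]: "bv x \<noteq> bv (x+1)" "bv (x+1) \<noteq> bv x" "bv x \<noteq> bv (x - 1)" "bv (x - 1) \<noteq> bv x"
  by (simp_all add: bv_eq)

lemma card_fc: "card (fc T j) = 3"
  unfolding fc_def by (simp add: card_insert_if)

lemma two_sub3: "card e = 2 \<Longrightarrow> e \<subseteq> {a,b,c} \<Longrightarrow> e = {a,b} \<or> e = {a,c} \<or> e = {b,c}"
  by (auto simp: card_2_iff)

lemma sub_fc: "card e = 2 \<Longrightarrow> e \<subseteq> fc T j \<Longrightarrow>
   e = {ap T, bv j} \<or> e = {ap T, bv (j+1)} \<or> e = {bv j, bv (j+1)}"
  unfolding fc_def by (rule two_sub3)

lemma face_base: "{bv y, bv (y+1)} \<subseteq> fc T j \<Longrightarrow> fc T j = fc T y"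
proof -
  assume a: "{bv y, bv (y+1)} \<subseteq> fc T j"
  then have "bv y = bv j \<or> bv y = bv (j+1)" "bv (y+1) = bv j \<or> bv (y+1) = bv (j+1)"
    unfolding fc_def by auto
  then have "int n dvd (j - y)" unfolding bv_eq
    by (smt (verit) dvd_diff ndvd1(1) ndvd1(2) dvd_minus_iff)
  then show ?thesis by (rule fc_cong)
qed

lemma face_apex: "{ap T, bv y} \<subseteq> fc T' j \<Longrightarrow> T' = T \<and> (fc T' j = fc T y \<or> fc T' j = fc T (y - 1))"
proof -
  assume a: "{ap T, bv y} \<subseteq> fc T' j"
  then have "T' = T" unfolding fc_def by auto
  moreover have "bv y = bv j \<or> bv y = bv (j+1)" using a unfolding fc_def by auto
  then have "int n dvd (j - y) \<or> int n dvd (j - (y - 1))" unfolding bv_eq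
    by (metis diff_diff_eq2 diff_minus_eq_add dvd_minus_iff minus_diff_eq)
  ultimately show ?thesis using fc_cong by blast
qed

lemma BP_cases: "f \<in> BP n \<Longrightarrow> (\<And>T j. f = fc T j \<Longrightarrow> P) \<Longrightarrow> P"
  unfolding BP_eq by blast

lemma F2: "card e = 2 \<Longrightarrow> f1 \<in> BP n \<Longrightarrow> f2 \<in> BP n \<Longrightarrow> f3 \<in> BP n \<Longrightarrow>
  e \<subseteq> f1 \<Longrightarrow> e \<subseteq> f2 \<Longrightarrow> e \<subseteq> f3 \<Longrightarrow> f1 \<noteq> f2 \<Longrightarrow> f1 \<noteq> f3 \<Longrightarrow> f2 = f3"
proof -
  assume e: "card e = 2" and f: "f1 \<in> BP n" "f2 \<in> BP n" "f3 \<in> BP n"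
    and s: "e \<subseteq> f1" "e \<subseteq> f2" "e \<subseteq> f3" and d: "f1 \<noteq> f2" "f1 \<noteq> f3"
  obtain T1 j1 where 1: "f1 = fc T1 j1" using f(1) by (rule BP_cases)
  obtain T2 j2 where 2: "f2 = fc T2 j2" using f(2) by (rule BP_cases)
  obtain T3 j3 where 3: "f3 = fc T3 j3" using f(3) by (rule BP_cases)
  from sub_fc[OF e s(1)[unfolded 1]]
  consider "e = {ap T1, bv j1}" | "e = {ap T1, bv (j1+1)}" | "e = {bv j1, bv (j1+1)}" by blast
  then show ?thesis
  proof cases
    case c: 3
    have "f1 = fc T1 j1" using 1 by simp
    moreover have "f2 = fc T2 j1" using face_base[of j1 T2 j2] s(2) 2 c by simp
    moreover have "f3 = fc T3 j1" using face_base[of j1 T3 j3] s(3) 3 c by simp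
    ultimately show ?thesis using d by (cases T1; cases T2; cases T3) auto
  next
    case c: 1
    have "f2 = fc T1 j1 \<or> f2 = fc T1 (j1 - 1)" "f3 = fc T1 j1 \<or> f3 = fc T1 (j1 - 1)"
      "f1 = fc T1 j1 \<or> f1 = fc T1 (j1 - 1)"
      using face_apex s 1 2 3 c by metis+
    then show ?thesis using d by metis
  next
    case c: 2
    have "f2 = fc T1 (j1+1) \<or> f2 = fc T1 (j1+1 - 1)" "f3 = fc T1 (j1+1) \<or> f3 = fc T1 (j1+1 - 1)"
      "f1 = fc T1 (j1+1) \<or> f1 = fc T1 (j1+1 - 1)"
      using face_apex s 1 2 3 c by metis+
    then show ?thesis using d by metis
  qed
qed

lemma tri_edges_iff: "e \<in> tri_edges (BP n) \<longleftrightarrow> (\<exists>T y. e = {ap T, bv y}) \<or> (\<exists>y. e = E y)"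
proof
  assume "e \<in> tri_edges (BP n)"
  then obtain f where e: "card e = 2" "f \<in> BP n" "e \<subseteq> f" unfolding tri_edges_def by blast
  obtain T j where "f = fc T j" using e(2) by (rule BP_cases)
  then show "(\<exists>T y. e = {ap T, bv y}) \<or> (\<exists>y. e = E y)"
    using sub_fc[OF e(1)] e(3) unfolding E_def by blast
next
  assume "(\<exists>T y. e = {ap T, bv y}) \<or> (\<exists>y. e = E y)"
  then show "e \<in> tri_edges (BP n)"
  proof
    assume "\<exists>T y. e = {ap T, bv y}"
    then obtain T y where "e = {ap T, bv y}" by blast
    moreover have "{ap T, bv y} \<subseteq> fc T y" unfolding fc_def by auto
    moreover have "card {ap T, bv y} = 2" by (simp add: card_insert_if)
    ultimately show ?thesis unfolding tri_edges_def using fc_in by blast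
  next
    assume "\<exists>y. e = E y"
    then obtain y where "e = E y" by blast
    moreover have "E y \<subseteq> fc True y" unfolding fc_def E_def by auto
    moreover have "card (E y) = 2" unfolding E_def by (simp add: card_insert_if)
    ultimately show ?thesis unfolding tri_edges_def using fc_in by blast
  qed
qed

lemma E_eq: "E x = E y \<longleftrightarrow> int n dvd (x - y)"
proof
  assume "E x = E y"
  then have "(bv x = bv y \<and> bv (x+1) = bv (y+1)) \<or> (bv x = bv (y+1) \<and> bv (x+1) = bv y)"
    unfolding E_def by (auto simp: doubleton_eq_iff)
  then show "int n dvd (x - y)" unfolding bv_eq
  proof
    assume "int n dvd x - (y + 1) \<and> int n dvd x + 1 - y"
    then have "int n dvd (x + 1 - y) - (x - (y + 1))" by (blast intro: dvd_diff)
    moreover have "(x + 1 - y) - (x - (y + 1)) = 2" by simp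
    ultimately show ?thesis by simp
  qed simp
next
  assume "int n dvd (x - y)"
  then show "E x = E y" using bv_cong[of x y] bv_cong[of "x+1" "y+1"] by (simp add: E_def)
qed

lemma E_ap[simp]: "E x \<noteq> {ap T, bv y}" "{ap T, bv y} \<noteq> E x"
  unfolding E_def by (auto simp: doubleton_eq_iff)

end

lemma periodic_mult: assumes "\<And>t. f (t + p) = f t" shows "f (t + p * (c::nat)) = f t"
proof (induction c)
  case (Suc c)
  have "f (t + p * Suc c) = f ((t + p * c) + p)" by (simp add: algebra_simps)
  then show ?case using Suc assms by simp
qed simp

lemma periodic_mod: fixes f :: "nat \<Rightarrow> 'a" shows "(\<And>t. f (t + p) = f t) \<Longrightarrow> f (t mod p) = f t"
  using periodic_mult[of f p "t mod p" "t div p"] by simp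

lemma union_ne: "e0 \<inter> e2 = {} \<Longrightarrow> \<not> e0 \<subseteq> e1 \<Longrightarrow> e0 \<union> e1 \<noteq> e1 \<union> e2" by blast

context bp begin

definition zg :: "int \<Rightarrow> int \<Rightarrow> bp_vertex \<Rightarrow> nat \<Rightarrow> bp_vertex set" where
  "zg d x T r = (if r = 0 then {bv x, bv (x+d)} else if r = 1 then {bv (x+d), T} else {bv (x+2*d), T})"

definition zf :: "int \<Rightarrow> int \<Rightarrow> bool \<Rightarrow> nat \<Rightarrow> bp_vertex set" where
  "zf d s b t = zg d (s + 2*d*int (t div 3)) (ap (b = even (t div 3))) (t mod 3)"

lemma zg_cong: "int n dvd (x - x') \<Longrightarrow> zg d x T r = zg d x' T r"
  unfolding zg_def using bv_cong[of "x+d" "x'+d"] bv_cong[of "x+2*d" "x'+2*d"] bv_cong[of x x'] by simp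

lemma zf_cong: "int n dvd (s - s') \<Longrightarrow> zf d s b t = zf d s' b t"
  unfolding zf_def by (rule zg_cong) simp

lemma zf_block: "zf d s b (t + 3*c) = zf d (s + 2*d*int c) (b = even c) t"
proof -
  have 1: "(t + 3*c) div 3 = t div 3 + c" "(t + 3*c) mod 3 = t mod 3" by simp_all
  have 2: "s + 2*d*int (t div 3 + c) = s + 2*d*int c + 2*d*int (t div 3)" by (simp add: algebra_simps)
  have 3: "(b = even (t div 3 + c)) = ((b = even c) = even (t div 3))" by auto
  show ?thesis unfolding zf_def 1 2 3 ..
qed

lemma zf_shift: assumes h: "int n dvd (s0 + 2*d*int c - s)" and b: "b = (b0 = even c)"
  shows "zf d s b t = zf d s0 b0 (t + 3*c)"
proof -
  have "zf d s0 b0 (t + 3*c) = zf d (s0 + 2*d*int c) b t" by (simp add: zf_block b)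
  also have "\<dots> = zf d s b t" by (rule zf_cong) (use h in \<open>simp add: dvd_diff_commute\<close>)
  finally show ?thesis by simp
qed

definition mm :: nat where "mm = (if odd n then 2*n else if odd (n div 2) then n else n div 2)"

lemma mm_pos: "0 < mm" using n3 unfolding mm_def by auto
lemma mm_even: "even mm" unfolding mm_def by auto
lemma mm_dvd: "int n dvd 2 * int mm"
proof -
  have "n dvd 2 * mm" unfolding mm_def by auto
  then show ?thesis by (metis of_nat_dvd_iff of_nat_mult of_nat_numeral)
qed

lemma mm_min: assumes "0 < e" "int n dvd 2 * int e" "even e" shows "mm \<le> e"
proof -
  have "n dvd 2 * e" using assms(2) by (metis of_nat_dvd_iff of_nat_mult of_nat_numeral)
  then obtain c where c: "2 * e = n * c" by (auto elim: dvdE)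
  show ?thesis
  proof (cases "odd n")
    case True
    then have "even c" using c by (metis dvd_triv_left even_mult_iff)
    then obtain c' where "c = 2 * c'" by (auto elim: evenE)
    then have e: "e = n * c'" using c by simp
    then have "even c'" using assms(3) True by simp
    then obtain c'' where "c' = 2 * c''" by (auto elim: evenE)
    then have "e = 2 * n * c''" using e by simp
    moreover have "c'' \<noteq> 0" using assms(1) \<open>e = 2*n*c''\<close> by auto
    ultimately show ?thesis using True unfolding mm_def by simp
  next
    case False
    then obtain k where k: "n = 2 * k" by (auto elim: evenE)
    then have e: "e = k * c" using c by simp
    have "c \<noteq> 0" using assms(1) e by auto
    show ?thesis
    proof (cases "odd k")
      case True
      then have "even c" using e assms(3) by simp
      then obtain c' where "c = 2 * c'" by (auto elim: evenE)
      then have "e = n * c'" "c' \<noteq> 0" using e k \<open>c \<noteq> 0\<close> by auto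
      then show ?thesis using True k unfolding mm_def by simp
    next
      case False
      then show ?thesis using e k \<open>c \<noteq> 0\<close> unfolding mm_def by simp
    qed
  qed
qed

definition LL :: nat where "LL = 3 * mm"
lemma LL_pos: "0 < LL" using mm_pos unfolding LL_def by simp

lemma zf_period: "zf d s b (t + LL) = zf d s b t"
proof -
  have "zf d s b (t + LL) = zf d (s + 2*d*int mm) (b = even mm) t"
    unfolding LL_def by (rule zf_block)
  also have "\<dots> = zf d (s + 2*d*int mm) b t" using mm_even by simp
  also have "\<dots> = zf d s b t"
  proof (rule zf_cong)
    have e: "s + 2*d*int mm - s = (2 * int mm) * d" by (simp add: ac_simps)
    show "int n dvd s + 2 * d * int mm - s" unfolding e by (rule dvd_mult2[OF mm_dvd])
  qed
  finally show ?thesis .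
qed

lemma zf_mod: "zf d s b (t mod LL) = zf d s b t"
  by (rule periodic_mod) (rule zf_period)

definition zl :: "int \<Rightarrow> int \<Rightarrow> bool \<Rightarrow> bp_vertex set list" where
  "zl d s b = map (zf d s b) [0..<LL]"

lemma zl_len[simp]: "length (zl d s b) = LL" by (simp add: zl_def)
lemma zl_nth: "i < LL \<Longrightarrow> zl d s b ! i = zf d s b i" by (simp add: zl_def)
lemma zl_nth_mod: "zl d s b ! (i mod LL) = zf d s b i"
  using LL_pos by (simp add: zl_nth zf_mod)

definition zzc :: "bp_vertex set \<Rightarrow> bp_vertex set \<Rightarrow> bp_vertex set \<Rightarrow> bool" where
  "zzc e0 e1 e2 \<longleftrightarrow> e0 \<in> tri_edges (BP n) \<and> e1 \<in> tri_edges (BP n) \<and> e0 \<noteq> e1 \<and>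
     (\<exists>f\<in>BP n. e0 \<union> e1 \<subseteq> f) \<and> e0 \<union> e1 \<noteq> e1 \<union> e2 \<and> e0 \<inter> e2 = {}"

lemma is_zz_iff: "is_zz_list (BP n) es \<longleftrightarrow> es \<noteq> [] \<and>
  (\<forall>i<length es. zzc (es ! i) (es ! ((i+1) mod length es)) (es ! ((i+2) mod length es))) \<and>
  (\<forall>d. 0 < d \<and> d < length es \<longrightarrow> rotate d es \<noteq> es)"
  unfolding is_zz_list_def zzc_def Let_def ..

lemma te_ap[simp]: "{ap T, bv y} \<in> tri_edges (BP n)" "{bv y, ap T} \<in> tri_edges (BP n)"
  unfolding tri_edges_iff by (auto simp: insert_commute)

lemma te_b: "y = x + 1 \<or> x = y + 1 \<Longrightarrow> {bv x, bv y} \<in> tri_edges (BP n)"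
  unfolding tri_edges_iff E_def by (auto simp: insert_commute)

lemma zf_p1: "zf 1 s b 0 = {bv s, bv (s+1)}" "zf 1 s b 1 = {bv (s+1), ap b}"
  "zf 1 s b 2 = {bv (s+2), ap b}" "zf 1 s b 3 = {bv (s+2), bv (s+3)}" "zf 1 s b 4 = {bv (s+3), ap (\<not>b)}"
  by (simp_all add: zf_def zg_def add.assoc)

lemma zf_m1: "zf (-1) s b 0 = {bv s, bv (s - 1)}" "zf (-1) s b 1 = {bv (s - 1), ap b}"
  "zf (-1) s b 2 = {bv (s - 2), ap b}" "zf (-1) s b 3 = {bv (s - 2), bv (s - 3)}" "zf (-1) s b 4 = {bv (s - 3), ap (\<not>b)}"
  by (simp_all add: zf_def zg_def algebra_simps)

lemma fc_wit: "A \<subseteq> fc T j \<Longrightarrow> \<exists>f\<in>BP n. A \<subseteq> f" using fc_in by blast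

lemma zzc_p0: "zzc (zf 1 s b 0) (zf 1 s b 1) (zf 1 s b 2)"
  unfolding zzc_def zf_p1
  by (intro conjI te_b fc_wit[of _ b s] union_ne) (auto simp: fc_def doubleton_eq_iff bv_eq)

lemma zzc_p1: "zzc (zf 1 s b 1) (zf 1 s b 2) (zf 1 s b 3)"
  unfolding zzc_def zf_p1
  by (intro conjI te_b fc_wit[of _ b "s+1"] union_ne) (auto simp: fc_def doubleton_eq_iff bv_eq add.assoc)

lemma zzc_p2: "zzc (zf 1 s b 2) (zf 1 s b 3) (zf 1 s b 4)"
  unfolding zzc_def zf_p1
  by (intro conjI te_b fc_wit[of _ b "s+2"] union_ne) (auto simp: fc_def doubleton_eq_iff bv_eq add.assoc)

lemma zzc_m0: "zzc (zf (-1) s b 0) (zf (-1) s b 1) (zf (-1) s b 2)"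
  unfolding zzc_def zf_m1
  by (intro conjI te_b fc_wit[of _ b "s - 1"] union_ne) (auto simp: fc_def doubleton_eq_iff bv_eq)

lemma zzc_m1: "zzc (zf (-1) s b 1) (zf (-1) s b 2) (zf (-1) s b 3)"
  unfolding zzc_def zf_m1
  by (intro conjI te_b fc_wit[of _ b "s - 2"] union_ne) (auto simp: fc_def doubleton_eq_iff bv_eq)

lemma zzc_m2: "zzc (zf (-1) s b 2) (zf (-1) s b 3) (zf (-1) s b 4)"
  unfolding zzc_def zf_m1
  by (intro conjI te_b fc_wit[of _ b "s - 3"] union_ne) (auto simp: fc_def doubleton_eq_iff bv_eq)

lemma zzc_base: assumes "d = 1 \<or> d = -1" "r < 3"
  shows "zzc (zf d s b r) (zf d s b (r+1)) (zf d s b (r+2))"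
proof -
  have r: "r = 0 \<or> r = 1 \<or> r = 2" using assms(2) by auto
  then show ?thesis using assms(1) zzc_p0 zzc_p1 zzc_p2 zzc_m0 zzc_m1 zzc_m2
    by (elim disjE) (simp_all add: numeral_eq_Suc)
qed

lemma zzc_zf: assumes "d = 1 \<or> d = -1"
  shows "zzc (zf d s b t) (zf d s b (t+1)) (zf d s b (t+2))"
proof -
  obtain r c where t: "t = r + 3*c" and r: "r < 3" by (metis mod_less_divisor mod_mult_div_eq mult.commute zero_less_numeral)
  have "zzc (zf d s b (r + 3*c)) (zf d s b ((r+1) + 3*c)) (zf d s b ((r+2) + 3*c))"
    unfolding zf_block by (rule zzc_base[OF assms r])
  then show ?thesis using t by simp
qed

end

lemma class_rot: "zz_class (rotate c xs) = zz_class xs"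
proof (cases "xs = []")
  case True then show ?thesis by simp
next
  case False
  then have L: "length xs > 0" by simp
  show ?thesis unfolding zz_class_def
  proof (intro set_eqI iffI)
    fix ys assume "ys \<in> {rotate k (rotate c xs) |k. True}"
    then show "ys \<in> {rotate k xs |k. True}" by (auto simp: rotate_rotate)
  next
    fix ys assume "ys \<in> {rotate k xs |k. True}"
    then obtain k where ys: "ys = rotate k xs" by blast
    have le: "c \<le> length xs * c" using L by (simp add: Suc_le_eq)
    have "rotate (k + length xs * c - c) (rotate c xs) = rotate (k + length xs * c) xs"
    proof -
      have "k + length xs * c - c + c = k + length xs * c" using le by linarith
      then show ?thesis by (simp add: rotate_rotate)
    qed
    also have "\<dots> = rotate k xs" by (metis rotate_conv_mod mod_mult_self2)
    finally have "ys = rotate (k + length xs * c - c) (rotate c xs)" using ys by simp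
    then show "ys \<in> {rotate k (rotate c xs) |k. True}" by blast
  qed
qed

lemma prim_period: assumes ne: "xs \<noteq> []" and prim: "\<forall>c. 0 < c \<and> c < length xs \<longrightarrow> rotate c xs \<noteq> xs"
  and per: "\<And>t. xs ! ((t + p) mod length xs) = xs ! (t mod length xs)"
  shows "length xs dvd p"
proof (rule ccontr)
  assume nd: "\<not> length xs dvd p"
  define c where "c = p mod length xs"
  have c: "0 < c" "c < length xs" using nd ne unfolding c_def by (auto simp: dvd_eq_mod_eq_0)
  have "rotate c xs = xs"
  proof (rule nth_equalityI)
    fix i assume i: "i < length (rotate c xs)"
    have "rotate c xs ! i = xs ! ((c + i) mod length xs)" using i by (simp add: nth_rotate)
    also have "(c + i) mod length xs = (i + p) mod length xs" unfolding c_def by (metis add.commute mod_add_right_eq)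
    also have "xs ! \<dots> = xs ! (i mod length xs)" by (rule per)
    also have "\<dots> = xs ! i" using i by simp
    finally show "rotate c xs ! i = xs ! i" .
  qed simp
  then show False using prim c by blast
qed

context bp begin

lemma zf01: "zf d s b 0 = {bv s, bv (s+d)}" "zf d s b 1 = {bv (s+d), ap b}" "zf d s b (Suc 0) = {bv (s+d), ap b}"
  by (simp_all add: zf_def zg_def)

lemma zf_ap_ne: "r mod 3 \<noteq> 0 \<Longrightarrow> \<exists>x T. zf d s b r = {bv x, ap T}"
  unfolding zf_def zg_def by auto

lemma pair_eq: "d = 1 \<or> d = -1 \<Longrightarrow> {bv x, bv (x+d)} = {bv y, bv (y+d)} \<Longrightarrow> int n dvd (x - y)"
proof -
  assume d: "d = 1 \<or> d = -1" and e: "{bv x, bv (x+d)} = {bv y, bv (y+d)}"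
  then have "bv x = bv y \<or> (bv x = bv (y+d) \<and> bv (x+d) = bv y)" by (auto simp: doubleton_eq_iff)
  then show ?thesis unfolding bv_eq
  proof
    assume "int n dvd x - (y + d) \<and> int n dvd x + d - y"
    then have "int n dvd (x + d - y) - (x - (y + d))" by (blast intro: dvd_diff)
    moreover have "(x + d - y) - (x - (y + d)) = 2 * d" by simp
    ultimately show ?thesis using d by auto
  qed
qed

lemma zl_prim: assumes d: "d = 1 \<or> d = -1" and c: "0 < c" "c < LL"
  shows "rotate c (zl d s b) \<noteq> zl d s b"
proof
  assume eq: "rotate c (zl d s b) = zl d s b"
  have zc: "zf d s b (c + i) = zf d s b i" if "i < LL" for i
  proof -
    have "rotate c (zl d s b) ! i = zl d s b ! i" using eq by simp
    then show ?thesis using that by (simp add: nth_rotate zl_nth_mod zl_nth)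
  qed
  obtain r e where ce: "c = r + 3*e" and r: "r < 3" by (metis mod_less_divisor mod_mult_div_eq mult.commute zero_less_numeral)
  have z0: "zf d s b c = {bv s, bv (s+d)}" using zc[of 0] LL_pos by (simp add: zf01)
  have z1: "zf d s b (c+1) = {bv (s+d), ap b}" using zc[of 1] LL_pos mm_pos by (simp add: zf01 LL_def)
  have "r = 0"
  proof (rule ccontr)
    assume "r \<noteq> 0"
    then have "c mod 3 \<noteq> 0" using ce r by simp
    then obtain x T where "zf d s b c = {bv x, ap T}" using zf_ap_ne by blast
    then show False using z0 by (auto simp: doubleton_eq_iff)
  qed
  then have ce: "c = 3*e" using ce by simp
  define s' where "s' = s + 2*d*int e"
  have "zf d s b c = zf d s' (b = even e) 0" unfolding ce s'_def using zf_block[of d s b 0 e] by simp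
  then have "{bv s', bv (s'+d)} = {bv s, bv (s+d)}" using z0 by (simp add: zf01)
  then have "int n dvd s' - s" using pair_eq[OF d] by blast
  then have dv: "int n dvd 2 * int e" using d unfolding s'_def by auto
  have "zf d s b (c+1) = zf d s' (b = even e) 1" unfolding ce s'_def using zf_block[of d s b 1 e] by (simp add: add.commute)
  then have "{bv (s'+d), ap (b = even e)} = {bv (s+d), ap b}" using z1 by (simp add: zf01)
  then have "ap (b = even e) = ap b" by (auto simp: doubleton_eq_iff)
  then have ev: "even e" by auto
  have "0 < e" using c ce by simp
  then have "mm \<le> e" using mm_min dv ev by blast
  then show False using c ce unfolding LL_def by simp
qed

lemma zl_zz: assumes d: "d = 1 \<or> d = -1" shows "is_zz_list (BP n) (zl d s b)"
  unfolding is_zz_iff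
proof (intro conjI allI impI)
  show "zl d s b \<noteq> []" using LL_pos by (simp add: zl_def)
next
  fix i assume "i < length (zl d s b)"
  then show "zzc (zl d s b ! i) (zl d s b ! ((i + 1) mod length (zl d s b))) (zl d s b ! ((i + 2) mod length (zl d s b)))"
    using zzc_zf[OF d, of s b i] by (simp add: zl_nth zl_nth_mod)
next
  fix c assume "0 < c \<and> c < length (zl d s b)"
  then show "rotate c (zl d s b) \<noteq> zl d s b" using zl_prim[OF d] by simp
qed

lemma te_card: "e \<in> tri_edges (BP n) \<Longrightarrow> card e = 2" unfolding tri_edges_def by blast

lemma BP_card: "f \<in> BP n \<Longrightarrow> card f = 3" by (auto elim: BP_cases simp: card_fc)

lemma face_union: assumes "e0 \<in> tri_edges (BP n)" "e1 \<in> tri_edges (BP n)" "e0 \<noteq> e1" "e0 \<union> e1 \<subseteq> f" "f \<in> BP n"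
  shows "e0 \<union> e1 = f"
proof -
  have c: "card e0 = 2" "card e1 = 2" "card f = 3" using assms te_card BP_card by auto
  have fin: "finite f" using c(3) by (intro card_ge_0_finite) simp
  have "\<not> e1 \<subseteq> e0"
  proof
    assume "e1 \<subseteq> e0"
    then have "e1 = e0" using c card_subset_eq by (metis card_ge_0_finite zero_less_numeral)
    then show False using assms(3) by simp
  qed
  then have "e0 \<subset> e0 \<union> e1" by blast
  then have "card e0 < card (e0 \<union> e1)" using fin assms(4) by (meson psubset_card_mono finite_subset)
  then have "card (e0 \<union> e1) \<ge> 3" using c by simp
  moreover have "card (e0 \<union> e1) \<le> 3" using card_mono[OF fin assms(4)] c by simp
  ultimately show ?thesis using card_subset_eq[OF fin assms(4)] c by simp
qed

lemma det: assumes a: "zzc e0 e1 e2" "zzc e0 e1 e2'" "zzc e1 e2 x" "zzc e1 e2' y"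
  shows "e2 = e2'"
proof -
  from a(1) obtain f0 where f0: "f0 \<in> BP n" "e0 \<union> e1 \<subseteq> f0" unfolding zzc_def by blast
  from a(3) obtain f2 where f2: "f2 \<in> BP n" "e1 \<union> e2 \<subseteq> f2" unfolding zzc_def by blast
  from a(4) obtain f3 where f3: "f3 \<in> BP n" "e1 \<union> e2' \<subseteq> f3" unfolding zzc_def by blast
  have u0: "e0 \<union> e1 = f0" using face_union a(1) f0 unfolding zzc_def by blast
  have u2: "e1 \<union> e2 = f2" using face_union a(3) f2 unfolding zzc_def by blast
  have u3: "e1 \<union> e2' = f3" using face_union a(4) f3 unfolding zzc_def by blast
  have c1: "card e1 = 2" using a(1) te_card unfolding zzc_def by blast
  have "f2 = f3"
    by (rule F2[OF c1 f0(1) f2(1) f3(1)]) (use a(1,2) u0 u2 u3 in \<open>auto simp: zzc_def\<close>)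
  have "e0 \<inter> e1 \<noteq> {}"
  proof
    assume dj: "e0 \<inter> e1 = {}"
    have "card e0 = 2" using a(1) te_card unfolding zzc_def by blast
    then have "card (e0 \<union> e1) = 4" using c1 dj card_Un_disjoint
      by (metis add_2_eq_Suc card.infinite nat.distinct(1) numeral_2_eq_2 numeral_Bit0)
    then show False using u0 BP_card[OF f0(1)] by simp
  qed
  then obtain w where w: "w \<in> e0" "w \<in> e1" by blast
  have fin: "finite f2" using BP_card[OF f2(1)] by (intro card_ge_0_finite) simp
  have cf: "card (f2 - {w}) = 2" using BP_card[OF f2(1)] w u2 fin by auto
  have s2: "e2 \<subseteq> f2 - {w}" "e2' \<subseteq> f2 - {w}" using a(1,2) w u2 u3 \<open>f2 = f3\<close> unfolding zzc_def by auto
  have "card e2 = 2" "card e2' = 2" using a(3,4) te_card unfolding zzc_def by auto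
  then have "e2 = f2 - {w}" "e2' = f2 - {w}" using s2 cf fin by (metis card_subset_eq finite_Diff)+
  then show ?thesis by simp
qed

end

context bp begin

lemma zfr: "zf d s b 0 = {bv s, bv (s+d)}" "zf d s b 1 = {bv (s+d), ap b}" "zf d s b 2 = {bv (s+2*d), ap b}"
  "zf d s b 3 = {bv (s + 2*d), bv (s+2*d+d)}"
  by (simp_all add: zf_def zg_def)

lemma h1: "zf 1 (j - 1) T 1 = {ap T, bv j}" "zf 1 (j - 1) T 2 = {ap T, bv (j+1)}"
proof -
  have a: "j - 1 + 1 = j" "j - 1 + 2 * 1 = j + 1" by arith+
  show "zf 1 (j - 1) T 1 = {ap T, bv j}" "zf 1 (j - 1) T 2 = {ap T, bv (j+1)}"
    unfolding zfr a by (simp_all only: insert_commute)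
qed

lemma h2: "zf (-1) (j+2) T 1 = {ap T, bv (j+1)}" "zf (-1) (j+2) T 2 = {ap T, bv j}"
proof -
  have a: "j + 2 + -1 = j + 1" "j + 2 + 2 * - 1 = j" by arith+
  show "zf (-1) (j+2) T 1 = {ap T, bv (j+1)}" "zf (-1) (j+2) T 2 = {ap T, bv j}"
    unfolding zfr a by (simp_all only: insert_commute)
qed

lemma h3: "zf 1 (j - 2) T 2 = {ap T, bv j}" "zf 1 (j - 2) T 3 = {bv j, bv (j+1)}"
proof -
  have a: "j - 2 + 2 * 1 = j" "j - 2 + 2 * 1 + 1 = j + 1" by arith+
  show "zf 1 (j - 2) T 2 = {ap T, bv j}" "zf 1 (j - 2) T 3 = {bv j, bv (j+1)}"
    unfolding zfr a by (simp_all only: insert_commute)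
qed

lemma h4: "zf (-1) (j+3) T 2 = {ap T, bv (j+1)}" "zf (-1) (j+3) T 3 = {bv j, bv (j+1)}"
proof -
  have a: "j + 3 + 2 * - 1 = j + 1" "j + 1 + - 1 = j" by arith+
  show "zf (-1) (j+3) T 2 = {ap T, bv (j+1)}" "zf (-1) (j+3) T 3 = {bv j, bv (j+1)}"
    unfolding zfr a by (simp_all only: insert_commute)
qed

lemma h5: "zf 1 j T 0 = {bv j, bv (j+1)}" "zf 1 j T 1 = {ap T, bv (j+1)}"
  by (simp_all add: zf_def zg_def insert_commute)

lemma h6: "zf (-1) (j+1) T 0 = {bv j, bv (j+1)}" "zf (-1) (j+1) T 1 = {ap T, bv j}"
  by (simp_all add: zf_def zg_def insert_commute)

lemma wit: "(d = 1 \<or> d = -1) \<Longrightarrow> r < 3 \<Longrightarrow> e0 = zf d s b r \<Longrightarrow> e1 = zf d s b (r+1) \<Longrightarrow>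
  \<exists>d s b r. (d = 1 \<or> d = -1) \<and> r < 3 \<and> e0 = zf d s b r \<and> e1 = zf d s b (r+1)" by blast

lemma start: assumes "e0 \<in> tri_edges (BP n)" "e1 \<in> tri_edges (BP n)" "e0 \<noteq> e1" "f \<in> BP n" "e0 \<union> e1 \<subseteq> f"
  shows "\<exists>d s b r. (d = 1 \<or> d = -1) \<and> r < 3 \<and> e0 = zf d s b r \<and> e1 = zf d s b (r+1)"
proof -
  obtain T j where f: "f = fc T j" using assms(4) by (rule BP_cases)
  have c: "card e0 = 2" "card e1 = 2" using assms te_card by auto
  have s: "e0 \<subseteq> fc T j" "e1 \<subseteq> fc T j" using assms(5) f by auto
  from sub_fc[OF c(1) s(1)] sub_fc[OF c(2) s(2)] assms(3)
  consider "e0 = {ap T, bv j}" "e1 = {ap T, bv (j+1)}"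
    | "e0 = {ap T, bv (j+1)}" "e1 = {ap T, bv j}"
    | "e0 = {ap T, bv j}" "e1 = {bv j, bv (j+1)}"
    | "e0 = {ap T, bv (j+1)}" "e1 = {bv j, bv (j+1)}"
    | "e0 = {bv j, bv (j+1)}" "e1 = {ap T, bv (j+1)}"
    | "e0 = {bv j, bv (j+1)}" "e1 = {ap T, bv j}" by metis
  then show ?thesis
  proof cases
    case 1 then show ?thesis using h1[of j T] by (intro wit[of 1 1 e0 "j - 1" T e1]) (simp_all add: numeral_2_eq_2 numeral_3_eq_3)
  next
    case 2 then show ?thesis using h2[of j T] by (intro wit[of "-1" 1 e0 "j + 2" T e1]) (simp_all add: numeral_2_eq_2 numeral_3_eq_3)
  next
    case 3 then show ?thesis using h3[of j T] by (intro wit[of 1 2 e0 "j - 2" T e1]) (simp_all add: numeral_2_eq_2 numeral_3_eq_3)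
  next
    case 4 then show ?thesis using h4[of j T] by (intro wit[of "-1" 2 e0 "j + 3" T e1]) (simp_all add: numeral_2_eq_2 numeral_3_eq_3)
  next
    case 5 then show ?thesis using h5[of j T] by (intro wit[of 1 0 e0 j T e1]) (simp_all add: numeral_2_eq_2 numeral_3_eq_3)
  next
    case 6 then show ?thesis using h6[of j T] by (intro wit[of "-1" 0 e0 "j + 1" T e1]) (simp_all add: numeral_2_eq_2 numeral_3_eq_3)
  qed
qed

lemma complete: assumes zz: "is_zz_list (BP n) es"
  shows "\<exists>d s b r. (d = 1 \<or> d = -1) \<and> es = rotate r (zl d s b)"
proof -
  note Z = zz[unfolded is_zz_iff]
  define L' where "L' = length es"
  have L'pos: "0 < L'" using Z unfolding L'_def by simp
  define h where "h t = es ! (t mod L')" for t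
  have hz: "zzc (h t) (h (t+1)) (h (t+2))" for t
  proof -
    have "t mod L' < length es" using L'pos unfolding L'_def by simp
    then have "zzc (es ! (t mod L')) (es ! ((t mod L' + 1) mod L')) (es ! ((t mod L' + 2) mod L'))"
      using Z unfolding L'_def by blast
    then show ?thesis unfolding h_def by (simp add: mod_Suc_eq mod_Suc_Suc_eq)
  qed
  from hz[of 0] obtain f where "h 0 \<in> tri_edges (BP n)" "h 1 \<in> tri_edges (BP n)" "h 0 \<noteq> h 1"
    "f \<in> BP n" "h 0 \<union> h 1 \<subseteq> f" unfolding zzc_def by auto
  from start[OF this] obtain d s b r where d: "d = 1 \<or> d = -1" and r: "r < 3"
    and h01: "h 0 = zf d s b r" "h 1 = zf d s b (r+1)" by blast
  have hh2: "h t = zf d s b (r + t) \<and> h (Suc t) = zf d s b (Suc (r + t))" for t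
  proof (induction t)
    case 0 then show ?case using h01 by simp
  next
    case (Suc t)
    have "h (Suc (Suc t)) = zf d s b (Suc (Suc (r + t)))"
      by (rule det[of "h t" "h (t+1)" _ _ "h (t+3)" "zf d s b (r + t + 3)"])
         (use hz[of t] hz[of "t+1"] zzc_zf[OF d, of s b "r+t"] zzc_zf[OF d, of s b "r+t+1"] Suc in \<open>simp_all add: numeral_eq_Suc\<close>)
    then show ?case using Suc by simp
  qed
  then have hh: "h t = zf d s b (r + t)" for t by blast
  have hper: "h (t + L') = h t" for t unfolding h_def by simp
  have d1: "L' dvd LL"
    unfolding L'_def
  proof (rule prim_period)
    show "es \<noteq> []" "\<forall>c. 0 < c \<and> c < length es \<longrightarrow> rotate c es \<noteq> es" using Z by auto
    fix t show "es ! ((t + LL) mod length es) = es ! (t mod length es)"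
      using hh[of "t + LL"] hh[of t] zf_period[of d s b "r + t"] unfolding h_def L'_def by (simp add: add.assoc)
  qed
  have zper: "zf d s b (t + L') = zf d s b t" for t
  proof -
    have rl: "r \<le> LL" using r mm_pos unfolding LL_def by simp
    have "zf d s b (t + L') = zf d s b ((t + L') + LL)" by (simp add: zf_period)
    also have "\<dots> = zf d s b (r + ((t + LL - r) + L'))" using rl by (simp add: algebra_simps)
    also have "\<dots> = h ((t + LL - r) + L')" by (simp add: hh)
    also have "\<dots> = h (t + LL - r)" by (rule hper)
    also have "\<dots> = zf d s b (r + (t + LL - r))" by (simp add: hh)
    also have "\<dots> = zf d s b (t + LL)" using rl by simp
    also have "\<dots> = zf d s b t" by (rule zf_period)
    finally show ?thesis .
  qed
  have d2: "LL dvd L'"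
  proof -
    have "length (zl d s b) dvd L'"
    proof (rule prim_period)
      show "zl d s b \<noteq> []" using LL_pos by (simp add: zl_def)
      show "\<forall>c. 0 < c \<and> c < length (zl d s b) \<longrightarrow> rotate c (zl d s b) \<noteq> zl d s b" using zl_prim[OF d] by simp
      fix t show "zl d s b ! ((t + L') mod length (zl d s b)) = zl d s b ! (t mod length (zl d s b))"
        by (simp add: zl_nth_mod zper)
    qed
    then show ?thesis by simp
  qed
  have LLeq: "L' = LL" using d1 d2 by (rule dvd_antisym)
  have "es = rotate r (zl d s b)"
  proof (rule nth_equalityI)
    show "length es = length (rotate r (zl d s b))" using LLeq unfolding L'_def by simp
    fix i assume i: "i < length es"
    have "rotate r (zl d s b) ! i = zf d s b (r + i)" using i LLeq unfolding L'_def by (simp add: nth_rotate zl_nth_mod)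
    also have "\<dots> = h i" by (simp add: hh)
    also have "\<dots> = es ! i" using i unfolding h_def L'_def by simp
    finally show "es ! i = rotate r (zl d s b) ! i" by simp
  qed
  then show ?thesis using d by blast
qed

end

lemma zz_rev_class: "zz_rev (zz_class xs) = zz_class (rev xs)"
proof (cases "xs = []")
  case True then show ?thesis by (simp add: zz_rev_def zz_class_def)
next
  case False
  then have L: "0 < length xs" by simp
  show ?thesis unfolding zz_rev_def zz_class_def
  proof (intro set_eqI iffI)
    fix ys assume "ys \<in> rev ` {rotate k xs |k. True}"
    then obtain k where ys: "ys = rev (rotate k xs)" by blast
    define j where "j = length xs - k mod length xs"
    have "rotate j (rev xs) = rev (rotate (length xs - j mod length xs) xs)" by (rule rotate_rev)
    also have "rotate (length xs - j mod length xs) xs = rotate k xs"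
    proof (cases "k mod length xs = 0")
      case True
      then have "j = length xs" unfolding j_def by simp
      then show ?thesis using True by (metis diff_zero mod_self rotate_conv_mod rotate_length01 rotate_id)
    next
      case False
      then have "j < length xs" "0 < j" unfolding j_def using L by auto
      then have "length xs - j mod length xs = k mod length xs" unfolding j_def by simp
      then show ?thesis by (metis rotate_conv_mod)
    qed
    finally have "ys = rotate j (rev xs)" using ys by simp
    then show "ys \<in> {rotate k (rev xs) |k. True}" by blast
  next
    fix ys assume "ys \<in> {rotate k (rev xs) |k. True}"
    then obtain k where "ys = rotate k (rev xs)" by blast
    then have "ys = rev (rotate (length xs - k mod length xs) xs)" by (simp add: rotate_rev)
    then show "ys \<in> rev ` {rotate k xs |k. True}" by blast
  qed
qed

lemma exists_period:
  fixes P :: "nat \<Rightarrow> bool"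
  assumes per: "\<And>t. P (t + L) = P t" and L: "0 < L"
  shows "(\<exists>i<L. P (k + i)) \<longleftrightarrow> (\<exists>t. P t)"
proof
  assume "\<exists>t. P t"
  then obtain t where t: "P t" by blast
  define i where "i = (t + L * k - k) mod L"
  have kk: "k \<le> L * k" using L by simp
  have "(k + i) mod L = (k + (t + L * k - k)) mod L" unfolding i_def by (simp add: mod_add_right_eq)
  also have "k + (t + L * k - k) = t + L * k" using kk by linarith
  also have "(t + L * k) mod L = t mod L" by simp
  finally have e: "(k + i) mod L = t mod L" .
  have "P (k + i)" using periodic_mod[of P L, OF per] e t by metis
  moreover have "i < L" unfolding i_def using L by simp
  ultimately show "\<exists>i<L. P (k + i)" by blast
qed blast

context bp begin

definition ZO :: "bp_vertex set list set set" where
  "ZO = {zz_class (zl 1 s b) | s b. True}"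

lemma zl_cong: "int n dvd (s - s') \<Longrightarrow> zl d s b = zl d s' b"
  unfolding zl_def using zf_cong by simp

lemma ZO_fin: "finite ZO"
proof -
  have "ZO = (\<lambda>(s, b). zz_class (zl 1 s b)) ` ({0..<int n} \<times> UNIV)"
  proof (intro set_eqI iffI)
    fix Z assume "Z \<in> ZO"
    then obtain s b where Z: "Z = zz_class (zl 1 s b)" unfolding ZO_def by blast
    have "zl 1 s b = zl 1 (s mod int n) b" by (rule zl_cong) (simp add: mod_eq_dvd_iff[symmetric])
    moreover have "s mod int n \<in> {0..<int n}" using npos by simp
    ultimately show "Z \<in> (\<lambda>(s, b). zz_class (zl 1 s b)) ` ({0..<int n} \<times> UNIV)" using Z by force
  qed (auto simp: ZO_def)
  then show ?thesis by simp
qed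

lemma class_mem: "xs \<in> zz_class xs" unfolding zz_class_def by (metis (mono_tags, lifting) mem_Collect_eq rotate0 id_apply)

lemma zl_shift: assumes "int n dvd (s0 + 2*d*int c - s)" "b = (b0 = even c)"
  shows "zl d s b = rotate (3*c) (zl d s0 b0)"
proof (rule nth_equalityI)
  fix i assume "i < length (zl d s b)"
  then show "zl d s b ! i = rotate (3 * c) (zl d s0 b0) ! i"
    using zf_shift[OF assms, of i] by (simp add: nth_rotate zl_nth_mod zl_nth add.commute)
qed simp

lemma cls_shift: "int n dvd (s0 + 2*d*int c - s) \<Longrightarrow> b = (b0 = even c) \<Longrightarrow>
    zz_class (zl d s b) = zz_class (zl d s0 b0)"
  using zl_shift class_rot by metis

lemma rot_zf: "xs = rotate k (zl d s b) \<Longrightarrow> i < LL \<Longrightarrow> xs ! i = zf d s b (k + i)"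
  by (simp add: nth_rotate zl_nth_mod)

lemma rot_eq_imp: assumes d: "d = 1 \<or> d = -1" and eq: "zl d s b = rotate k (zl d s' b')"
  shows "\<exists>q. int n dvd (s - s' - 2*d*int q) \<and> b = (b' = even q)"
proof -
  have z: "zf d s b i = zf d s' b' (k + i)" if "i < LL" for i
    using rot_zf[OF eq that] that by (simp add: zl_nth)
  have z0: "zf d s' b' k = {bv s, bv (s+d)}" using z[of 0] LL_pos by (simp add: zf01)
  have z1: "zf d s' b' (k+1) = {bv (s+d), ap b}" using z[of 1] LL_pos mm_pos by (simp add: zf01 LL_def add.commute)
  obtain r q where kq: "k = r + 3*q" and r: "r < 3" by (metis mod_less_divisor mod_mult_div_eq mult.commute zero_less_numeral)
  have "r = 0"
  proof (rule ccontr)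
    assume "r \<noteq> 0"
    then have "k mod 3 \<noteq> 0" using kq r by simp
    then obtain x T where "zf d s' b' k = {bv x, ap T}" using zf_ap_ne by blast
    then show False using z0 by (auto simp: doubleton_eq_iff)
  qed
  then have kq: "k = 3*q" using kq by simp
  define x where "x = s' + 2*d*int q"
  have "zf d s' b' k = zf d x (b' = even q) 0" unfolding kq x_def using zf_block[of d s' b' 0 q] by simp
  then have "{bv x, bv (x+d)} = {bv s, bv (s+d)}" using z0 by (simp add: zf01)
  then have dv: "int n dvd x - s" using pair_eq[OF d] by blast
  have "zf d s' b' (k+1) = zf d x (b' = even q) 1" unfolding kq x_def using zf_block[of d s' b' 1 q] by (simp add: add.commute)
  then have "{bv (x+d), ap (b' = even q)} = {bv (s+d), ap b}" using z1 by (simp add: zf01)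
  then have "ap (b' = even q) = ap b" by (auto simp: doubleton_eq_iff)
  then have "b = (b' = even q)" by auto
  moreover have "int n dvd (s - s' - 2*d*int q)" using dv unfolding x_def by (simp add: dvd_diff_commute algebra_simps)
  ultimately show ?thesis by blast
qed

lemma cls_eq_imp: assumes d: "d = 1 \<or> d = -1" and eq: "zz_class (zl d s b) = zz_class (zl d s' b')"
  shows "\<exists>q. int n dvd (s - s' - 2*d*int q) \<and> b = (b' = even q)"
proof -
  have "zl d s b \<in> zz_class (zl d s' b')" using eq class_mem by metis
  then obtain k where "zl d s b = rotate k (zl d s' b')" unfolding zz_class_def by blast
  then show ?thesis by (rule rot_eq_imp[OF d])
qed

lemma no_mix: assumes eq: "zl (-1) s b = rotate k (zl 1 s' b')" shows False
proof -
  have z: "zf (-1) s b i = zf 1 s' b' (k + i)" if "i < LL" for i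
    using rot_zf[OF eq that] that by (simp add: zl_nth)
  have z0: "zf 1 s' b' k = {bv s, bv (s - 1)}" using z[of 0] LL_pos by (simp add: zf01)
  have z1: "zf 1 s' b' (k+1) = {bv (s - 1), ap b}" using z[of 1] LL_pos mm_pos by (simp add: zf01 LL_def add.commute)
  obtain r q where kq: "k = r + 3*q" and r: "r < 3" by (metis mod_less_divisor mod_mult_div_eq mult.commute zero_less_numeral)
  have "r = 0"
  proof (rule ccontr)
    assume "r \<noteq> 0"
    then have "k mod 3 \<noteq> 0" using kq r by simp
    then obtain x T where "zf 1 s' b' k = {bv x, ap T}" using zf_ap_ne by blast
    then show False using z0 by (auto simp: doubleton_eq_iff)
  qed
  then have kq: "k = 3*q" using kq by simp
  define x where "x = s' + 2*int q"
  have "zf 1 s' b' k = zf 1 x (b' = even q) 0" unfolding kq x_def using zf_block[of 1 s' b' 0 q] by simp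
  then have a: "{bv x, bv (x+1)} = {bv s, bv (s - 1)}" using z0 by (simp add: zf01)
  have "zf 1 s' b' (k+1) = zf 1 x (b' = even q) 1" unfolding kq x_def using zf_block[of 1 s' b' 1 q] by (simp add: add.commute)
  then have "{bv (x+1), ap (b' = even q)} = {bv (s - 1), ap b}" using z1 by (simp add: zf01)
  then have c: "bv (x+1) = bv (s - 1)" by (auto simp: doubleton_eq_iff)
  from a have "(bv x = bv s \<and> bv (x+1) = bv (s - 1)) \<or> (bv x = bv (s - 1) \<and> bv (x+1) = bv s)"
    by (auto simp: doubleton_eq_iff)
  then show False
  proof
    assume "bv x = bv s \<and> bv (x+1) = bv (s - 1)"
    then have "int n dvd (x - s)" "int n dvd (x + 1 - (s - 1))" by (auto simp: bv_eq)
    then have "int n dvd (x + 1 - (s - 1)) - (x - s)" by (blast intro: dvd_diff)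
    then show False by simp
  next
    assume "bv x = bv (s - 1) \<and> bv (x+1) = bv s"
    then have "bv x = bv (x+1)" using c by simp
    then show False by simp
  qed
qed

lemma zfr2: "zf d s b (Suc (Suc 0)) = {bv (s+2*d), ap b}" "zf d s b (Suc (Suc (Suc 0))) = {bv (s + 2*d), bv (s+2*d+d)}"
  using zfr(3,4)[of d s b] by (simp_all add: numeral_2_eq_2 numeral_3_eq_3)

lemma rev_zl: assumes d: "d = 1 \<or> d = -1" shows "rev (zl d s b) = rotate 1 (zl (-d) (s + d) (\<not> b))"
proof (rule nth_equalityI)
  show "length (rev (zl d s b)) = length (rotate 1 (zl (- d) (s + d) (\<not> b)))" by simp
  fix i assume i: "i < length (rev (zl d s b))"
  then have iL: "i < LL" by simp
  obtain r p where ip: "i = r + 3*p" and r: "r < 3" by (metis mod_less_divisor mod_mult_div_eq mult.commute zero_less_numeral)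
  have pm: "p < mm" using iL ip unfolding LL_def by simp
  define p' where "p' = mm - 1 - p"
  have j: "LL - Suc i = (2 - r) + 3 * p'" using ip r pm unfolding p'_def LL_def by simp
  have lhs: "rev (zl d s b) ! i = zf d (s + 2*d*int p') (b = even p') (2 - r)"
    using i j by (simp add: rev_nth zl_nth zf_block)
  have rhs: "rotate 1 (zl (- d) (s + d) (\<not> b)) ! i = zf (-d) (s + d + 2*(-d)*int p) ((\<not>b) = even p) (r + 1)"
  proof -
    have "rotate 1 (zl (- d) (s + d) (\<not> b)) ! i = zf (-d) (s + d) (\<not> b) ((r+1) + 3*p)"
    proof -
      have "rotate 1 (zl (- d) (s + d) (\<not> b)) ! i = zl (- d) (s + d) (\<not> b) ! ((1 + i) mod LL)"
        using iL nth_rotate[of i "zl (- d) (s + d) (\<not> b)" 1] by simp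
      also have "\<dots> = zf (-d) (s + d) (\<not> b) (1 + i)" by (rule zl_nth_mod)
      finally show ?thesis using ip by (simp add: add.commute)
    qed
    then show ?thesis using zf_block[of "-d" "s+d" "\<not>b" "r+1" p] by simp
  qed
  have par: "(b = even p') = ((\<not>b) = even p)" using mm_even pm unfolding p'_def by auto
  have ip': "int p' = int mm - 1 - int p" using pm unfolding p'_def by simp
  define X where "X = s + 2*d*int p'"
  define Y where "Y = s + d + 2*(-d)*int p"
  have XY: "int n dvd (X - (Y - 3*d))"
  proof -
    have "X - (Y - 3*d) = (2 * int mm) * d" unfolding X_def Y_def ip' by (simp add: algebra_simps)
    then show ?thesis using dvd_mult2[OF mm_dvd] by simp
  qed
  have bvX: "bv (X + a) = bv (Y - 3*d + a)" for a using XY by (intro bv_cong) simp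
  have dd: "d * d = 1" using d by auto
  have "r = 0 \<or> r = 1 \<or> r = 2" using r by auto
  then show "rev (zl d s b) ! i = rotate 1 (zl (- d) (s + d) (\<not> b)) ! i"
    unfolding lhs rhs par X_def[symmetric] Y_def[symmetric]
  proof (elim disjE)
    assume "r = 0"
    then show "zf d X ((\<not> b) = even p) (2 - r) = zf (- d) Y ((\<not> b) = even p) (r + 1)"
      using bvX[of "2*d"] by (simp add: zfr zf01 zfr2 algebra_simps)
  next
    assume "r = 1"
    then show "zf d X ((\<not> b) = even p) (2 - r) = zf (- d) Y ((\<not> b) = even p) (r + 1)"
      using bvX[of "d"] by (simp add: zfr zf01 zfr2 algebra_simps)
  next
    assume "r = 2"
    then show "zf d X ((\<not> b) = even p) (2 - r) = zf (- d) Y ((\<not> b) = even p) (r + 1)"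
      using bvX[of "0"] bvX[of d] by (simp add: zfr zf01 zfr2 algebra_simps insert_commute)
  qed
qed

end

context bp begin

lemma class_rot1[simp]: "zz_class (rotate1 xs) = zz_class xs" using class_rot[of 1 xs] by simp

lemma ZO_sub: "ZO \<subseteq> zigzags (BP n)"
  unfolding ZO_def zigzags_def using zl_zz by blast

lemma zz_cases: assumes "Z \<in> zigzags (BP n)" shows "\<exists>d s b. (d = 1 \<or> d = -1) \<and> Z = zz_class (zl d s b)"
proof -
  obtain es where Z: "Z = zz_class es" "is_zz_list (BP n) es" using assms unfolding zigzags_def by blast
  from complete[OF Z(2)] obtain d s b r where "d = 1 \<or> d = -1" "es = rotate r (zl d s b)" by blast
  then show ?thesis using Z(1) class_rot by metis
qed

lemma not_both: assumes "Z \<in> ZO" shows "zz_rev Z \<notin> ZO"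
proof
  assume r: "zz_rev Z \<in> ZO"
  obtain s b where Z: "Z = zz_class (zl 1 s b)" using assms unfolding ZO_def by blast
  obtain s' b' where Z': "zz_rev Z = zz_class (zl 1 s' b')" using r unfolding ZO_def by blast
  have "zz_rev Z = zz_class (zl (-1) (s + 1) (\<not> b))"
    unfolding Z zz_rev_class using rev_zl[of 1 s b] by simp
  then have "zl (-1) (s+1) (\<not>b) \<in> zz_class (zl 1 s' b')" using Z' class_mem by metis
  then obtain k where "zl (-1) (s+1) (\<not>b) = rotate k (zl 1 s' b')" unfolding zz_class_def by blast
  then show False by (rule no_mix)
qed

lemma z_orient: "z_orientation (BP n) ZO"
  unfolding z_orientation_def
proof (intro conjI ballI impI)
  show "ZO \<subseteq> zigzags (BP n)" by (rule ZO_sub)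
next
  fix Z assume Z: "Z \<in> zigzags (BP n)"
  from zz_cases[OF Z] obtain d s b where d: "d = 1 \<or> d = -1" and Zd: "Z = zz_class (zl d s b)" by blast
  show "Z \<in> ZO \<or> zz_rev Z \<in> ZO"
  proof (cases "d = 1")
    case True then show ?thesis using Zd unfolding ZO_def by blast
  next
    case False
    then have "d = -1" using d by simp
    then have "zz_rev Z = zz_class (zl 1 (s - 1) (\<not> b))"
      unfolding Zd zz_rev_class using rev_zl[of "-1" s b] class_rot by simp
    then show ?thesis unfolding ZO_def by blast
  qed
next
  fix Z assume "Z \<in> zigzags (BP n)" "Z \<noteq> zz_rev Z"
  show "\<not> (Z \<in> ZO \<and> zz_rev Z \<in> ZO)" using not_both by blast
qed

lemma rep_rot: assumes "Z = zz_class xs" shows "\<exists>k. zz_rep Z = rotate k xs"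
proof -
  have "zz_rep Z \<in> Z" unfolding zz_rep_def using class_mem assms by (metis someI)
  then show ?thesis using assms unfolding zz_class_def by blast
qed

lemma pl_pos: assumes es: "es = rotate k (zl d s b)"
  shows "0 < passes_list es u v \<longleftrightarrow> (\<exists>t. zf d s b t = {u,v} \<and> v \<in> zf d s b (t+1) \<and> u \<notin> zf d s b (t+1))"
    (is "_ \<longleftrightarrow> (\<exists>t. ?Q t)")
proof -
  let ?S = "{i. i < length es \<and> es ! i = {u, v} \<and> v \<in> es ! ((i+1) mod length es) \<and> u \<notin> es ! ((i+1) mod length es)}"
  have fin: "finite ?S" by simp
  have len: "length es = LL" using es by simp
  have nx: "es ! ((i+1) mod LL) = zf d s b (k + i + 1)" for i
  proof -
    have "es ! ((i+1) mod LL) = zf d s b (k + (i+1) mod LL)" using rot_zf[OF es] LL_pos by simp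
    also have "\<dots> = zf d s b ((k + (i+1) mod LL) mod LL)" by (simp add: zf_mod)
    also have "(k + (i+1) mod LL) mod LL = (k + i + 1) mod LL" by (simp add: mod_add_right_eq add.assoc)
    also have "zf d s b \<dots> = zf d s b (k + i + 1)" by (simp add: zf_mod)
    finally show ?thesis .
  qed
  have "?S = {i. i < LL \<and> ?Q (k + i)}" using rot_zf[OF es] nx len by auto
  then have "0 < passes_list es u v \<longleftrightarrow> (\<exists>i<LL. ?Q (k + i))"
    unfolding passes_list_def using fin by (auto simp: card_gt_0_iff)
  also have "\<dots> \<longleftrightarrow> (\<exists>t. ?Q t)"
  proof (rule exists_period)
    fix t
    have e: "t + LL + 1 = (t + 1) + LL" by simp
    show "?Q (t + LL) = ?Q t" by (simp only: e zf_period)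
  qed (rule LL_pos)
  finally show ?thesis .
qed

lemma passes_pos: "0 < passes ZO u v \<longleftrightarrow> (\<exists>s b t. zf 1 s b t = {u,v} \<and> v \<in> zf 1 s b (t+1) \<and> u \<notin> zf 1 s b (t+1))"
proof -
  have "0 < passes ZO u v \<longleftrightarrow> (\<exists>Z\<in>ZO. passes_list (zz_rep Z) u v \<noteq> 0)"
    unfolding passes_def using sum_eq_0_iff[OF ZO_fin, of "\<lambda>Z. passes_list (zz_rep Z) u v"] by auto
  also have "\<dots> \<longleftrightarrow> (\<exists>s b t. zf 1 s b t = {u,v} \<and> v \<in> zf 1 s b (t+1) \<and> u \<notin> zf 1 s b (t+1))"
  proof
    assume "\<exists>Z\<in>ZO. passes_list (zz_rep Z) u v \<noteq> 0"
    then obtain Z where Z: "Z \<in> ZO" "passes_list (zz_rep Z) u v \<noteq> 0" by blast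
    obtain s b where Zs: "Z = zz_class (zl 1 s b)" using Z(1) unfolding ZO_def by blast
    obtain k where "zz_rep Z = rotate k (zl 1 s b)" using rep_rot[OF Zs] by blast
    from pl_pos[OF this, of u v] Z(2) show "\<exists>s b t. zf 1 s b t = {u,v} \<and> v \<in> zf 1 s b (t+1) \<and> u \<notin> zf 1 s b (t+1)" by auto
  next
    assume "\<exists>s b t. zf 1 s b t = {u,v} \<and> v \<in> zf 1 s b (t+1) \<and> u \<notin> zf 1 s b (t+1)"
    then obtain s b t where t: "zf 1 s b t = {u,v} \<and> v \<in> zf 1 s b (t+1) \<and> u \<notin> zf 1 s b (t+1)" by blast
    define Z where "Z = zz_class (zl 1 s b)"
    have "Z \<in> ZO" unfolding Z_def ZO_def by blast
    obtain k where "zz_rep Z = rotate k (zl 1 s b)" using rep_rot Z_def by blast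
    from pl_pos[OF this, of u v] t have "passes_list (zz_rep Z) u v \<noteq> 0" by auto
    then show "\<exists>Z\<in>ZO. passes_list (zz_rep Z) u v \<noteq> 0" using \<open>Z \<in> ZO\<close> by blast
  qed
  finally show ?thesis .
qed

lemma no_back: assumes a: "zf 1 s b t = {bv y, bv (y+1)}" and b: "bv y \<in> zf 1 s b (t+1)" shows False
proof -
  obtain r q where tq: "t = r + 3*q" and r: "r < 3" by (metis mod_less_divisor mod_mult_div_eq mult.commute zero_less_numeral)
  have "r = 0"
  proof (rule ccontr)
    assume "r \<noteq> 0"
    then have "t mod 3 \<noteq> 0" using tq r by simp
    then obtain x T where "zf 1 s b t = {bv x, ap T}" using zf_ap_ne by blast
    then show False using a by (auto simp: doubleton_eq_iff)
  qed
  then have tq: "t = 3*q" using tq by simp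
  define x where "x = s + 2*int q"
  have "zf 1 s b t = zf 1 x (b = even q) 0" unfolding tq x_def using zf_block[of 1 s b 0 q] by simp
  then have "{bv x, bv (x+1)} = {bv y, bv (y+1)}" using a by (simp add: zf01)
  then have "int n dvd x - y" using pair_eq[of 1] by simp
  then have xy: "bv x = bv y" by (simp add: bv_eq)
  have "zf 1 s b (t+1) = zf 1 x (b = even q) 1" unfolding tq x_def using zf_block[of 1 s b 1 q] by (simp add: add.commute)
  then have "bv y \<in> {bv (x+1), ap (b = even q)}" using b by (simp add: zf01)
  then show False using xy by auto
qed

lemma typeI_iff: "typeI_edge (BP n) ZO e \<longleftrightarrow> (\<exists>T y. e = {ap T, bv y})"
proof
  assume "typeI_edge (BP n) ZO e"
  then obtain u v where e: "e \<in> tri_edges (BP n)" "e = {u,v}" "0 < passes ZO u v" "0 < passes ZO v u"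
    unfolding typeI_edge_def by blast
  show "\<exists>T y. e = {ap T, bv y}"
  proof (rule ccontr)
    assume "\<not> ?thesis"
    then obtain y where ey: "e = E y" using e(1) tri_edges_iff by blast
    have "0 < passes ZO (bv (y+1)) (bv y)"
    proof -
      have "(u = bv y \<and> v = bv (y+1)) \<or> (u = bv (y+1) \<and> v = bv y)" using e(2) ey unfolding E_def
        by (auto simp: doubleton_eq_iff)
      then show ?thesis using e(3,4) by auto
    qed
    then obtain s b t where "zf 1 s b t = {bv (y+1), bv y}" "bv y \<in> zf 1 s b (t+1)" unfolding passes_pos by blast
    then show False using no_back by (metis insert_commute)
  qed
next
  assume "\<exists>T y. e = {ap T, bv y}"
  then obtain T y where e: "e = {ap T, bv y}" by blast
  have p1: "0 < passes ZO (ap T) (bv y)" unfolding passes_pos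
    by (rule exI[of _ "y - 2"], rule exI[of _ T], rule exI[of _ 2]) (simp add: h3)
  have p2: "0 < passes ZO (bv y) (ap T)" unfolding passes_pos
    by (rule exI[of _ "y - 1"], rule exI[of _ T], rule exI[of _ 1]) (simp add: h1 insert_commute del: One_nat_def)
  show "typeI_edge (BP n) ZO e" unfolding typeI_edge_def using p1 p2 e by auto
qed

lemma typeII_iff: "typeII_edge (BP n) ZO e \<longleftrightarrow> (\<exists>y. e = E y)"
  unfolding typeII_edge_def typeI_iff tri_edges_iff by (metis E_ap(1))

lemma base_E: "i \<in> {1..n} \<Longrightarrow> base_edge n i = E (int i - 1)"
  unfolding base_edge_def E_def by (simp add: base_bv nxt_bv)

lemma base_nxt_E: "i \<in> {1..n} \<Longrightarrow> base_edge n (nxt n i) = E (int i)"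
proof -
  assume i: "i \<in> {1..n}"
  have "nxt n i \<in> {1..n}" unfolding nxt_def using n3 by (simp add: Suc_le_eq)
  then have "base_edge n (nxt n i) = E (int (nxt n i) - 1)" by (rule base_E)
  also have "\<dots> = E (int i)" unfolding E_eq nxt_def by (simp add: zmod_int[symmetric] mod_eq_dvd_iff[symmetric])
  finally show ?thesis .
qed

lemma E_base: "\<exists>i\<in>{1..n}. E y = base_edge n i"
proof -
  define i where "i = nat (y mod int n) + 1"
  have i: "i \<in> {1..n}" unfolding i_def using nat_mod_lt by auto
  have "E (int i - 1) = E y" unfolding E_eq i_def using npos by (simp add: mod_eq_dvd_iff[symmetric])
  then show ?thesis using i base_E by metis
qed

lemma typeII_base: "typeII_edge (BP n) ZO e \<longleftrightarrow> (\<exists>i\<in>{1..n}. e = base_edge n i)"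
  unfolding typeII_iff using E_base base_E by metis

lemma typeI_face: "f \<in> BP n \<Longrightarrow> typeI_face (BP n) ZO f"
proof -
  assume f: "f \<in> BP n"
  obtain T j where fj: "f = fc T j" using f by (rule BP_cases)
  have "{e \<in> tri_edges (BP n). e \<subseteq> f \<and> typeI_edge (BP n) ZO e} = {{ap T, bv j}, {ap T, bv (j+1)}}"
  proof (intro set_eqI iffI)
    fix e assume "e \<in> {e \<in> tri_edges (BP n). e \<subseteq> f \<and> typeI_edge (BP n) ZO e}"
    then have e: "card e = 2" "e \<subseteq> fc T j" "\<exists>T y. e = {ap T, bv y}" using te_card fj typeI_iff by auto
    have "e \<noteq> {bv j, bv (j+1)}" using e(3) E_ap(1)[of j] unfolding E_def by metis
    with sub_fc[OF e(1,2)] show "e \<in> {{ap T, bv j}, {ap T, bv (j+1)}}" by blast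
  next
    fix e assume "e \<in> {{ap T, bv j}, {ap T, bv (j+1)}}"
    then show "e \<in> {e \<in> tri_edges (BP n). e \<subseteq> f \<and> typeI_edge (BP n) ZO e}"
      unfolding fj typeI_iff by (auto simp: fc_def)
  qed
  moreover have "card {{ap T, bv j}, {ap T, bv (j+1)}} = 2" by (simp add: doubleton_eq_iff)
  ultimately show ?thesis unfolding typeI_face_def using f by simp
qed

lemma zf_type: "typeII_edge (BP n) ZO (zf 1 s b i) \<longleftrightarrow> i mod 3 = 0"
  "i mod 3 \<noteq> 0 \<Longrightarrow> typeI_edge (BP n) ZO (zf 1 s b i)"
  unfolding typeII_iff typeI_iff zf_def zg_def E_def by (auto simp: doubleton_eq_iff insert_commute)

lemma homog: "Z \<in> ZO \<Longrightarrow> homogeneous (BP n) ZO Z"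
proof -
  assume "Z \<in> ZO"
  then obtain s b where Z: "Z = zz_class (zl 1 s b)" unfolding ZO_def by blast
  show ?thesis unfolding homogeneous_def
    by (rule bexI[of _ "zl 1 s b"]) (auto simp: LL_def zl_nth zf_type Z class_mem)
qed

lemma dir: "i \<in> {1..n} \<Longrightarrow> typeII_dir (BP n) ZO (Base i) (Base (nxt n i))"
proof -
  assume i: "i \<in> {1..n}"
  have "typeII_edge (BP n) ZO {Base i, Base (nxt n i)}" using i typeII_base unfolding base_edge_def by blast
  moreover have "0 < passes ZO (Base i) (Base (nxt n i))" unfolding passes_pos base_bv[OF i] nxt_bv
    using h5[of "int i - 1" True] by (intro exI[of _ "int i - 1"] exI[of _ True] exI[of _ 0]) simp
  ultimately show ?thesis unfolding typeII_dir_def by blast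
qed

lemma vert: "typeI_vertex (BP n) ZO x \<longleftrightarrow> x = TopA \<or> x = TopB"
proof
  assume v: "typeI_vertex (BP n) ZO x"
  then have "x \<in> \<Union>(BP n)" unfolding typeI_vertex_def tri_vertices_def by blast
  then obtain T j where "x \<in> fc T j" unfolding BP_eq by blast
  then have "x = ap T \<or> (\<exists>y. x = bv y)" unfolding fc_def by blast
  then show "x = TopA \<or> x = TopB"
  proof
    assume "x = ap T" then show ?thesis by (cases T) (auto simp: ap_def)
  next
    assume "\<exists>y. x = bv y"
    then obtain y where y: "x = bv y" by blast
    have "E y \<in> tri_edges (BP n)" using tri_edges_iff by blast
    moreover have "x \<in> E y" unfolding E_def y by simp
    ultimately have "typeI_edge (BP n) ZO (E y)" using v unfolding typeI_vertex_def by blast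
    then have False unfolding typeI_iff by (metis E_ap(1))
    then show ?thesis ..
  qed
next
  assume "x = TopA \<or> x = TopB"
  then obtain T where x: "x = ap T" unfolding ap_def by (metis (full_types))
  have "x \<in> tri_vertices (BP n)" unfolding tri_vertices_def x using fc_in[of T 0] by (auto simp: fc_def)
  moreover have "typeI_edge (BP n) ZO e" if "e \<in> tri_edges (BP n)" "x \<in> e" for e
  proof -
    from that(1) consider T' y where "e = {ap T', bv y}" | y where "e = E y" unfolding tri_edges_iff by blast
    then show ?thesis
    proof cases
      case 1 then show ?thesis unfolding typeI_iff by blast
    next
      case 2 then have False using that(2) x unfolding E_def by auto
      then show ?thesis ..
    qed
  qed
  ultimately show "typeI_vertex (BP n) ZO x" unfolding typeI_vertex_def by blast
qed

end

lemma cross1: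
  fixes n h p a1 a2 :: int
  assumes "n = 2*h - 1" "p = h \<or> p = h - 1" "0 \<le> a1" "a2 < n" "a2 = a1 + h" "a1 \<noteq> 0"
  shows "0 < a1 \<and> a1 < p \<and> p < a2"
proof -
  have "0 < a1" using assms(3,6) by linarith
  then show ?thesis using assms(1,2,4,5) by auto
qed

lemma cross2:
  fixes n h p a1 a2 :: int
  assumes "n = 2*h - 1" "p = h \<or> p = h - 1" "0 \<le> a2" "a1 < n" "a2 = a1 - h + 1" "a2 \<noteq> 0" "a2 \<noteq> p" "a1 \<noteq> p"
  shows "0 < a2 \<and> a2 < p \<and> p < a1"
proof -
  have "0 < a2" using assms(3,6) by linarith
  from assms(2) show ?thesis
  proof
    assume p: "p = h"
    have "a1 \<noteq> h" using assms(8) p by simp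
    then show ?thesis using \<open>0 < a2\<close> assms(1,4,5) p by auto
  next
    assume p: "p = h - 1"
    have "a2 \<noteq> h - 1" using assms(7) p by simp
    then show ?thesis using \<open>0 < a2\<close> assms(1,4,5) p by auto
  qed
qed

lemma crossing:
  fixes n h p a1 a2 sg c :: int
  assumes n: "n = 2*h - 1" and h: "2 \<le> h" and p: "p = h \<or> p = h - 1" and sg: "sg = 1 \<or> sg = -1"
    and a: "0 \<le> a1" "a1 < n" "0 \<le> a2" "a2 < n" and c: "a2 - a1 - sg*h = n*c"
    and ne: "a1 \<noteq> 0" "a1 \<noteq> p" "a2 \<noteq> 0" "a2 \<noteq> p"
  shows "(0 < a1 \<and> a1 < p \<and> p < a2) \<or> (0 < a2 \<and> a2 < p \<and> p < a1)"
proof -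
  have sh: "sg*h = h \<or> sg*h = -h" using sg by auto
  have c1: "c \<le> 1"
  proof (rule ccontr)
    assume "\<not> c \<le> 1"
    then have "n*c \<ge> n*2" using n h by (intro mult_left_mono) auto
    then show False using c a sh n h by linarith
  qed
  have c2: "c \<ge> -1"
  proof (rule ccontr)
    assume "\<not> c \<ge> -1"
    then have "n*c \<le> n*(-2)" using n h by (intro mult_left_mono) auto
    then show False using c a sh n h by linarith
  qed
  have "c = -1 \<or> c = 0 \<or> c = 1" using c1 c2 by linarith
  then have nc: "n*c = -n \<or> n*c = 0 \<or> n*c = n" by auto
  have "a2 = a1 + h \<or> a2 = a1 - h + 1 \<or> a1 = a2 + h \<or> a1 = a2 - h + 1"
  proof -
    from sh show ?thesis
    proof
      assume s: "sg*h = h"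
      from nc show ?thesis
      proof (elim disjE)
        assume "n*c = -n" then show ?thesis using s c a n by linarith
      next
        assume "n*c = 0" then show ?thesis using s c n a h by linarith
      next
        assume "n*c = n" then show ?thesis using s c n a h by linarith
      qed
    next
      assume s: "sg*h = -h"
      from nc show ?thesis
      proof (elim disjE)
        assume "n*c = -n" then show ?thesis using s c a n h by linarith
      next
        assume "n*c = 0" then show ?thesis using s c n a h by linarith
      next
        assume "n*c = n" then show ?thesis using s c n a h by linarith
      qed
    qed
  qed
  then show ?thesis
  proof (elim disjE)
    assume "a2 = a1 + h" then show ?thesis using cross1[OF n p a(1) a(4) _ ne(1)] by blast
  next
    assume "a2 = a1 - h + 1" then show ?thesis using cross2[OF n p a(3) a(2) _ ne(3) ne(4) ne(2)] by blast
  next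
    assume "a1 = a2 + h" then show ?thesis using cross1[OF n p a(3) a(2) _ ne(3)] by blast
  next
    assume "a1 = a2 - h + 1" then show ?thesis using cross2[OF n p a(1) a(4) _ ne(1) ne(2) ne(4)] by blast
  qed
qed

lemma sorted_mono: "sorted_wrt (<) (xs :: nat list) \<Longrightarrow> length xs = 8 \<Longrightarrow> strict_mono_on {0..7} (\<lambda>k. xs ! k)"
  unfolding strict_mono_on_def by (auto intro: sorted_wrt_nth_less)

context bp begin

lemma zf_3q: "zf 1 s b (3*q) = E (s + 2*int q)" unfolding zf_def zg_def E_def by simp

definition hh :: nat where "hh = (n+1) div 2"

lemma hh: "odd n \<Longrightarrow> 2 * hh = n + 1" unfolding hh_def by (auto elim: oddE)
lemma hh2: "odd n \<Longrightarrow> 2 \<le> hh" "odd n \<Longrightarrow> hh < n" using hh n3 by fastforce+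

lemma LL_odd: "odd n \<Longrightarrow> LL = 6 * n" unfolding LL_def mm_def by simp

lemma es_at: "odd n \<Longrightarrow> q < 2*n \<Longrightarrow> zl 1 x b ! (3*q) = E (x + 2*int q)"
  using LL_odd by (simp add: zl_nth zf_3q)

lemma odd_dvd2: "odd n \<Longrightarrow> int n dvd 2 * m \<Longrightarrow> int n dvd m"
proof -
  assume o: "odd n" and d: "int n dvd 2 * m"
  then obtain c where c: "2 * m = int n * c" by (auto elim: dvdE)
  have "odd (int n)" using o by simp
  moreover have "even (int n * c)" using c[symmetric] by simp
  ultimately have "even c" by simp
  then obtain c' where "c = 2 * c'" by (auto elim: evenE)
  then have "m = int n * c'" using c by simp
  then show ?thesis by simp
qed

lemma pos_ex: assumes o: "odd n" shows "\<exists>a<n. int n dvd (2 * int a - w)"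
proof -
  define a where "a = nat ((w * int hh) mod int n)"
  have ia: "int a = (w * int hh) mod int n" unfolding a_def using npos by simp
  have an: "a < n" unfolding a_def using npos by (simp add: nat_less_iff)
  have m: "(w * int hh) mod int n = w * int hh - (w * int hh) div int n * int n"
    by (simp add: minus_div_mult_eq_mod)
  have h2: "2 * int hh = int n + 1" using hh[OF o] by linarith
  have "2 * int a - w = int n * (w - 2 * ((w * int hh) div int n))"
    unfolding ia m using h2 by (simp add: algebra_simps)
  then show ?thesis using an by (intro exI[of _ a]) simp
qed

lemma odd_one: assumes o: "odd n" shows "zz_class (zl 1 s b) = zz_class (zl 1 0 True)"
proof -
  obtain a where a: "a < n" "int n dvd (2 * int a - s)" using pos_ex[OF o] by blast
  define c where "c = (if even a = b then a else a + n)"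
  have ev: "b = (True = even c)" unfolding c_def using o by auto
  have dv: "int n dvd (0 + 2*1*int c - s)"
  proof (cases "even a = b")
    case True then show ?thesis using a unfolding c_def by simp
  next
    case False
    then have cc: "c = a + n" unfolding c_def by simp
    have d: "int n dvd (2 * int a - s) + int n * 2" by (rule dvd_add[OF a(2)]) simp
    have e: "0 + 2*1*int c - s = (2 * int a - s) + int n * 2" unfolding cc by simp
    show ?thesis unfolding e by (rule d)
  qed
  show ?thesis by (rule cls_shift[OF dv ev])
qed

lemma ZO_odd: "odd n \<Longrightarrow> ZO = {zz_class (zl 1 0 True)}"
  unfolding ZO_def using odd_one by auto

lemma special: assumes o: "odd n" and i: "i \<in> {1..n}"
  shows "special_pair (BP n) ZO (base_edge n i) (base_edge n (nxt n i))"
proof -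
  define x where "x = int i - 1"
  have c1: "base_edge n i = E x" unfolding x_def by (rule base_E[OF i])
  have c2: "base_edge n (nxt n i) = E (x + 1)" unfolding x_def using base_nxt_E[OF i] by simp
  have ne: "E x \<noteq> E (x+1)" by (simp add: E_eq)
  have int: "E x \<inter> E (x+1) \<noteq> {}" unfolding E_def by auto
  have es: "zl 1 x True \<in> zz_class (zl 1 0 True)" using odd_one[OF o, of x True] class_mem by metis
  have h2: "2 * int hh = int n + 1" using hh[OF o] by linarith
  have hn: "hh < n" using hh2[OF o] by simp
  have p1: "zl 1 x True ! (3*0) = E x" using es_at[OF o, of 0] npos by simp
  have p2: "zl 1 x True ! (3*hh) = E (x+1)" using es_at[OF o, of hh] hn h2 by (simp add: E_eq)
  have p3: "zl 1 x True ! (3*n) = E x" using es_at[OF o, of n] npos by (simp add: E_eq)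
  have p4: "zl 1 x True ! (3*(hh+n)) = E (x+1)" using es_at[OF o, of "hh + n"] hn h2 by (simp add: E_eq algebra_simps)
  have pos: "\<exists>i1 i2 i3 i4. i1 < i2 \<and> i2 < i3 \<and> i3 < i4 \<and> i4 < length (zl 1 x True) \<and>
        zl 1 x True ! i1 = E x \<and> zl 1 x True ! i2 = E (x+1) \<and> zl 1 x True ! i3 = E x \<and> zl 1 x True ! i4 = E (x+1)"
    apply (rule exI[of _ "3*0"], rule exI[of _ "3*hh"], rule exI[of _ "3*n"], rule exI[of _ "3*(hh+n)"])
    using p1 p2 p3 p4 hn hh2[OF o] LL_odd[OF o] by simp
  have ex: "\<exists>Z. ZO = {Z} \<and> (\<exists>es\<in>Z. \<exists>i1 i2 i3 i4. i1 < i2 \<and> i2 < i3 \<and> i3 < i4 \<and> i4 < length es \<and>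
        es ! i1 = E x \<and> es ! i2 = E (x+1) \<and> es ! i3 = E x \<and> es ! i4 = E (x+1))"
    by (rule exI[of _ "zz_class (zl 1 0 True)"], rule conjI[OF ZO_odd[OF o]], rule bexI[of _ "zl 1 x True"], rule pos, rule es)
  show ?thesis unfolding special_pair_def c1 c2 typeII_iff
    by (intro conjI ne int ex) blast+
qed

lemma E_adj: assumes "E x \<inter> E y \<noteq> {}" "E x \<noteq> E y"
  shows "\<exists>sg. (sg = 1 \<or> sg = -1) \<and> E y = E (x + sg)"
proof -
  from assms(1) have "bv x = bv y \<or> bv x = bv (y+1) \<or> bv (x+1) = bv y \<or> bv (x+1) = bv (y+1)"
    unfolding E_def by auto
  then show ?thesis
  proof (elim disjE)
    assume "bv x = bv y" then have "E x = E y" by (simp add: E_eq bv_eq)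
    then show ?thesis using assms(2) by simp
  next
    assume "bv x = bv (y+1)" then have "E y = E (x + -1)" by (simp add: E_eq bv_eq dvd_diff_commute algebra_simps)
    then show ?thesis by blast
  next
    assume "bv (x+1) = bv y" then have "E y = E (x + 1)" by (simp add: E_eq bv_eq dvd_diff_commute)
    then show ?thesis by blast
  next
    assume "bv (x+1) = bv (y+1)" then have "E x = E y" by (simp add: E_eq bv_eq)
    then show ?thesis using assms(2) by simp
  qed
qed

lemma conc_core: assumes o: "odd n" and ap: "0 < a" "a < p" "p < a'" "a' < n"
  and C1: "C1 = E x" and T1: "T1 = E (x + 2 * int a)" and C2: "C2 = E (x + 2 * int p)" and T2: "T2 = E (x + 2 * int a')"
  and ne: "C1 \<noteq> T1" "C1 \<noteq> T2" "C2 \<noteq> T1" "C2 \<noteq> T2"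
  shows "concordant ZO C1 C2 T1 T2"
proof -
  have es: "zl 1 x True \<in> zz_class (zl 1 0 True)" using odd_one[OF o, of x True] class_mem by metis
  define js where "js = [3*0, 3*a, 3*p, 3*a', 3*n, 3*(n+a), 3*(n+p), 3*(n+a')]"
  have sm: "strict_mono_on {0..7} (\<lambda>k. js ! k)" by (rule sorted_mono) (use ap in \<open>simp_all add: js_def\<close>)
  have E2: "E (x + 2 * int (n + q)) = E (x + 2 * int q)" for q by (simp add: E_eq algebra_simps)
  have v: "zl 1 x True ! (3*q) = E (x + 2*int q)" if "q < 2*n" for q using es_at[OF o that] .
  have vals: "zl 1 x True ! (js!0) = C1" "zl 1 x True ! (js!1) = T1" "zl 1 x True ! (js!2) = C2"
    "zl 1 x True ! (js!3) = T2" "zl 1 x True ! (js!4) = C1" "zl 1 x True ! (js!5) = T1"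
    "zl 1 x True ! (js!6) = C2" "zl 1 x True ! (js!7) = T2"
    unfolding js_def using v[of 0] v[of a] v[of p] v[of a'] v[of n] v[of "n+a"] v[of "n+p"] v[of "n+a'"] ap npos
    by (simp_all add: C1 T1 C2 T2 E_eq)
  have len: "js ! 7 < length (zl 1 x True)" unfolding js_def using ap LL_odd[OF o] by simp
  show ?thesis unfolding concordant_def ZO_odd[OF o]
    using ne es sm len vals by blast
qed

lemma conc: assumes o: "odd n" and sp: "special_pair (BP n) ZO c1 c2" "special_pair (BP n) ZO t1 t2"
  and dj: "{c1, c2} \<inter> {t1, t2} = {}"
  shows "concordant ZO c1 c2 t1 t2 \<or> concordant ZO c1 c2 t2 t1"
proof -
  from sp(1) obtain x y where c1: "c1 = E x" and c2y: "c2 = E y" and cne: "c1 \<noteq> c2" and cint: "c1 \<inter> c2 \<noteq> {}"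
    unfolding special_pair_def typeII_iff by blast
  from sp(2) obtain z u where t1: "t1 = E z" and t2u: "t2 = E u" and tne: "t1 \<noteq> t2" and tint: "t1 \<inter> t2 \<noteq> {}"
    unfolding special_pair_def typeII_iff by blast
  obtain sc where sc: "sc = 1 \<or> sc = -1" "c2 = E (x + sc)" using E_adj[of x y] c1 c2y cne cint by blast
  obtain st where st: "st = 1 \<or> st = -1" "t2 = E (z + st)" using E_adj[of z u] t1 t2u tne tint by blast
  have h2: "2 * int hh = int n + 1" using hh[OF o] by linarith
  define P where "P = (if sc = 1 then hh else hh - 1)"
  have hge: "2 \<le> hh" "hh < n" using hh2[OF o] by auto
  have iP: "int P = (if sc = 1 then int hh else int hh - 1)" unfolding P_def using hge by auto
  have P: "E (x + 2 * int P) = c2" unfolding sc(2) E_eq using sc(1) h2 iP by (auto simp: algebra_simps)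
  obtain A1 where A1: "A1 < n" "int n dvd (2 * int A1 - (z - x))" using pos_ex[OF o] by blast
  obtain A2 where A2: "A2 < n" "int n dvd (2 * int A2 - (z + st - x))" using pos_ex[OF o] by blast
  have T1: "E (x + 2 * int A1) = t1" unfolding t1 E_eq using A1(2) by (simp add: algebra_simps)
  have T2: "E (x + 2 * int A2) = t2" unfolding st(2) E_eq using A2(2) by (simp add: algebra_simps)
  have dne: "c1 \<noteq> t1" "c1 \<noteq> t2" "c2 \<noteq> t1" "c2 \<noteq> t2" using dj by auto
  have A1ne: "A1 \<noteq> 0" "A1 \<noteq> P" using dne T1 P c1 by auto
  have A2ne: "A2 \<noteq> 0" "A2 \<noteq> P" using dne T2 P c1 by auto
  have "int n dvd 2 * (int A2 - int A1 - st * int hh)"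
  proof -
    have e: "2 * (int A2 - int A1 - st * int hh) = (2 * int A2 - (z + st - x)) - (2 * int A1 - (z - x)) + int n * (- st)"
      using h2 by (simp add: algebra_simps)
    show ?thesis unfolding e by (intro dvd_add dvd_diff A1(2) A2(2)) simp
  qed
  then have "int n dvd (int A2 - int A1 - st * int hh)" by (rule odd_dvd2[OF o])
  then obtain c where c: "int A2 - int A1 - st * int hh = int n * c" by (auto elim: dvdE)
  have cr: "(0 < int A1 \<and> int A1 < int P \<and> int P < int A2) \<or> (0 < int A2 \<and> int A2 < int P \<and> int P < int A1)"
  proof (rule crossing[of "int n" "int hh" "int P" st "int A1" "int A2" c])
    show "int n = 2 * int hh - 1" using h2 by simp
    show "2 \<le> int hh" using hge by simp
    show "int P = int hh \<or> int P = int hh - 1" using iP by auto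
  qed (use st(1) A1 A2 c A1ne A2ne in auto)
  then show ?thesis
  proof
    assume "0 < int A1 \<and> int A1 < int P \<and> int P < int A2"
    then have "0 < A1" "A1 < P" "P < A2" by auto
    then have "concordant ZO c1 c2 t1 t2"
      using conc_core[OF o _ _ _ A2(1) c1 T1[symmetric] P[symmetric] T2[symmetric] dne] by blast
    then show ?thesis ..
  next
    assume "0 < int A2 \<and> int A2 < int P \<and> int P < int A1"
    then have "0 < A2" "A2 < P" "P < A1" by auto
    then have "concordant ZO c1 c2 t2 t1"
      using conc_core[OF o _ _ _ A1(1) c1 T2[symmetric] P[symmetric] T1[symmetric]] dne by blast
    then show ?thesis ..
  qed
qed

end

lemma filter_rot: "length (filter P (rotate r xs)) = length (filter P xs)"
proof -
  have "length (filter P (rotate r xs)) = length (filter P (drop (r mod length xs) xs)) + length (filter P (take (r mod length xs) xs))"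
    by (simp add: rotate_drop_take)
  also have "\<dots> = length (filter P xs)"
    by (metis append_take_drop_id filter_append length_append add.commute)
  finally show ?thesis .
qed

context bp begin

lemma occ_zl: "zz_occ (zz_class (zl 1 s b)) e = card {i. i < LL \<and> zf 1 s b i = e}"
proof -
  obtain k where k: "zz_rep (zz_class (zl 1 s b)) = rotate k (zl 1 s b)" using rep_rot by blast
  have "zz_occ (zz_class (zl 1 s b)) e = length (filter (\<lambda>y. y = e) (rotate k (zl 1 s b)))"
    unfolding zz_occ_def k by (simp add: length_filter_conv_card)
  also have "\<dots> = length (filter (\<lambda>y. y = e) (zl 1 s b))" by (rule filter_rot)
  also have "\<dots> = card {i. i < LL \<and> zf 1 s b i = e}" by (simp add: length_filter_conv_card zl_nth cong: conj_cong)
  finally show ?thesis .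
qed

lemma mm_evn: "n = 2*k \<Longrightarrow> mm = (if odd k then n else k)" unfolding mm_def by simp

lemma occ_set: assumes nk: "n = 2*k" shows "{i. i < LL \<and> zf 1 s b i = E s} = (\<lambda>q. 3*q) ` {q. q < mm \<and> k dvd q}"
proof (intro set_eqI iffI)
  fix i assume "i \<in> {i. i < LL \<and> zf 1 s b i = E s}"
  then have i: "i < LL" "zf 1 s b i = E s" by auto
  obtain r q where iq: "i = r + 3*q" and r: "r < 3" by (metis mod_less_divisor mod_mult_div_eq mult.commute zero_less_numeral)
  have "r = 0"
  proof (rule ccontr)
    assume "r \<noteq> 0"
    then have "i mod 3 \<noteq> 0" using iq r by simp
    then obtain x T where "zf 1 s b i = {bv x, ap T}" using zf_ap_ne by blast
    then show False using i(2) E_ap(1)[of s T x] by (simp add: insert_commute)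
  qed
  then have iq: "i = 3*q" using iq by simp
  have "E (s + 2 * int q) = E s" using i(2) iq zf_3q by simp
  then have "int n dvd 2 * int q" by (simp add: E_eq)
  then have "int k dvd int q" using nk by simp
  then have "k dvd q" by simp
  moreover have "q < mm" using i(1) iq unfolding LL_def by simp
  ultimately show "i \<in> (\<lambda>q. 3*q) ` {q. q < mm \<and> k dvd q}" using iq by blast
next
  fix i assume "i \<in> (\<lambda>q. 3*q) ` {q. q < mm \<and> k dvd q}"
  then obtain q where q: "i = 3*q" "q < mm" "k dvd q" by blast
  have "int n dvd 2 * int q" using nk q(3) by simp
  then have "E (s + 2 * int q) = E s" by (simp add: E_eq)
  then show "i \<in> {i. i < LL \<and> zf 1 s b i = E s}" using q zf_3q unfolding LL_def by simp
qed

lemma qset: assumes nk: "n = 2*k"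
  shows "{q. q < mm \<and> k dvd q} = (if odd k then {0, k} else {0})"
proof -
  have kp: "0 < k" using nk n3 by simp
  show ?thesis
  proof (cases "odd k")
    case True
    then have m: "mm = 2*k" using mm_evn[OF nk] nk by simp
    have "{q. q < 2*k \<and> k dvd q} = {0, k}"
    proof (intro set_eqI iffI)
      fix q assume "q \<in> {q. q < 2*k \<and> k dvd q}"
      then obtain c where "q = k*c" "k*c < 2*k" by (auto elim: dvdE)
      then have "c < 2" using kp by simp
      then have "c = 0 \<or> c = 1" by auto
      then show "q \<in> {0, k}" using \<open>q = k*c\<close> by auto
    qed (use kp in auto)
    then show ?thesis using m True by simp
  next
    case False
    then have m: "mm = k" using mm_evn[OF nk] by simp
    have "{q. q < k \<and> k dvd q} = {0}"
    proof (intro set_eqI iffI)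
      fix q assume "q \<in> {q. q < k \<and> k dvd q}"
      then obtain c where "q = k*c" "k*c < k" by (auto elim: dvdE)
      then have "c = 0" using kp by (metis mult_less_cancel1 mult.right_neutral less_one)
      then show "q \<in> {0}" using \<open>q = k*c\<close> by auto
    qed (use kp in auto)
    then show ?thesis using m False by simp
  qed
qed

lemma occ_val: assumes nk: "n = 2*k"
  shows "zz_occ (zz_class (zl 1 s b)) (E s) = (if odd k then 2 else 1)"
proof -
  have kp: "0 < k" using nk n3 by simp
  have "zz_occ (zz_class (zl 1 s b)) (E s) = card ((\<lambda>q. 3*q) ` {q. q < mm \<and> k dvd q})"
    unfolding occ_zl occ_set[OF nk] ..
  also have "\<dots> = card {q. q < mm \<and> k dvd q}" by (rule card_image) (simp add: inj_on_def)
  also have "\<dots> = (if odd k then 2 else 1)" unfolding qset[OF nk] using kp by simp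
  finally show ?thesis .
qed

lemma even_c: assumes nk: "n = 2*k" shows "\<exists>c. int n dvd (s mod 2 + 2 * int c - s)"
proof -
  define w where "w = (s - s mod 2) div 2"
  have sw: "s - s mod 2 = 2 * w" unfolding w_def by (simp add: minus_mod_eq_mult_div)
  define c where "c = nat (w mod int k)"
  have kp: "0 < k" using nk n3 by simp
  have ic: "int c = w mod int k" unfolding c_def using kp by simp
  have m: "w mod int k = w - w div int k * int k" by (simp add: minus_div_mult_eq_mod)
  have "s mod 2 + 2 * int c - s = int n * (- (w div int k))" unfolding ic m using sw nk by (simp add: algebra_simps)
  then show ?thesis by (intro exI[of _ c]) simp
qed

lemma smod2: "s mod 2 = 0 \<or> s mod (2::int) = 1" by auto

lemma cls_ne_par: assumes nk: "n = 2*k" and od: "odd (s - s')"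
  shows "zz_class (zl 1 s b) \<noteq> zz_class (zl 1 s' b')"
proof
  assume "zz_class (zl 1 s b) = zz_class (zl 1 s' b')"
  then obtain q where "int n dvd (s - s' - 2*1*int q)" using cls_eq_imp[of 1] by blast
  then obtain c where c: "s - s' - 2*1*int q = int n * c" by (auto elim: dvdE)
  then have "s - s' - 2*int q = 2 * (int k * c)" using nk by simp
  then have "even (s - s' - 2*int q)" by (metis dvd_triv_left)
  then show False using od by simp
qed

lemma cls_ne_b: assumes nk: "n = 2*k" and ek: "even k" and bb: "b \<noteq> b'"
  shows "zz_class (zl 1 s b) \<noteq> zz_class (zl 1 s b')"
proof
  assume "zz_class (zl 1 s b) = zz_class (zl 1 s b')"
  then obtain q where q: "int n dvd (s - s - 2*1*int q)" "b = (b' = even q)" using cls_eq_imp[of 1] by blast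
  then have "int k dvd int q" using nk by simp
  then have "k dvd q" by simp
  then have "even q" using ek by (metis dvd_trans)
  then show False using q(2) bb by simp
qed

lemma ZO_ok: assumes nk: "n = 2*k" and ok: "odd k"
  shows "ZO = {zz_class (zl 1 0 True), zz_class (zl 1 1 True)}"
proof (intro set_eqI iffI)
  fix Z assume "Z \<in> ZO"
  then obtain s b where Z: "Z = zz_class (zl 1 s b)" unfolding ZO_def by blast
  obtain c where c: "int n dvd (s mod 2 + 2 * int c - s)" using even_c[OF nk] by blast
  define c' where "c' = (if even c = b then c else c + k)"
  have ev: "b = (True = even c')" unfolding c'_def using ok by auto
  have dv: "int n dvd (s mod 2 + 2*1*int c' - s)"
  proof (cases "even c = b")
    case True then show ?thesis using c unfolding c'_def by simp
  next
    case False
    then have cc: "c' = c + k" unfolding c'_def by simp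
    have d: "int n dvd (s mod 2 + 2 * int c - s) + int n" by (rule dvd_add[OF c]) simp
    have e: "s mod 2 + 2*1*int c' - s = (s mod 2 + 2 * int c - s) + int n" unfolding cc using nk by simp
    show ?thesis unfolding e by (rule d)
  qed
  have "Z = zz_class (zl 1 (s mod 2) True)" unfolding Z by (rule cls_shift[OF dv ev])
  then show "Z \<in> {zz_class (zl 1 0 True), zz_class (zl 1 1 True)}" using smod2[of s] by auto
qed (auto simp: ZO_def)

lemma ZO_ek: assumes nk: "n = 2*k" and ek: "even k"
  shows "ZO = {zz_class (zl 1 0 True), zz_class (zl 1 0 False), zz_class (zl 1 1 True), zz_class (zl 1 1 False)}"
proof (intro set_eqI iffI)
  fix Z assume "Z \<in> ZO"
  then obtain s b where Z: "Z = zz_class (zl 1 s b)" unfolding ZO_def by blast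
  obtain c where c: "int n dvd (s mod 2 + 2 * int c - s)" using even_c[OF nk] by blast
  define b0 where "b0 = (b = even c)"
  have ev: "b = (b0 = even c)" unfolding b0_def by auto
  have "Z = zz_class (zl 1 (s mod 2) b0)" unfolding Z by (rule cls_shift) (use c ev in simp_all)
  then show "Z \<in> {zz_class (zl 1 0 True), zz_class (zl 1 0 False), zz_class (zl 1 1 True), zz_class (zl 1 1 False)}"
    using smod2[of s] by (cases b0) auto
qed (auto simp: ZO_def)

lemma even_odd_part: assumes nk: "n = 2*k" and ok: "odd k"
  shows "card ZO = 2 \<and> (\<forall>i\<in>{1..n}. \<exists>Z1\<in>ZO. \<exists>Z2\<in>ZO. Z1 \<noteq> Z2 \<and>
          zz_occ Z1 (base_edge n i) = 2 \<and> zz_occ Z2 (base_edge n (nxt n i)) = 2)"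
proof
  have "zz_class (zl 1 0 True) \<noteq> zz_class (zl 1 1 True)" by (rule cls_ne_par[OF nk]) simp
  then show "card ZO = 2" unfolding ZO_ok[OF nk ok] by simp
next
  show "\<forall>i\<in>{1..n}. \<exists>Z1\<in>ZO. \<exists>Z2\<in>ZO. Z1 \<noteq> Z2 \<and>
          zz_occ Z1 (base_edge n i) = 2 \<and> zz_occ Z2 (base_edge n (nxt n i)) = 2"
  proof
    fix i assume i: "i \<in> {1..n}"
    define x where "x = int i - 1"
    have b1: "base_edge n i = E x" unfolding x_def by (rule base_E[OF i])
    have b2: "base_edge n (nxt n i) = E (x + 1)" unfolding x_def using base_nxt_E[OF i] by simp
    have ne: "zz_class (zl 1 x True) \<noteq> zz_class (zl 1 (x+1) True)" by (rule cls_ne_par[OF nk]) simp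
    show "\<exists>Z1\<in>ZO. \<exists>Z2\<in>ZO. Z1 \<noteq> Z2 \<and> zz_occ Z1 (base_edge n i) = 2 \<and> zz_occ Z2 (base_edge n (nxt n i)) = 2"
      apply (rule bexI[of _ "zz_class (zl 1 x True)"], rule bexI[of _ "zz_class (zl 1 (x+1) True)"])
      using ne occ_val[OF nk, of x True] occ_val[OF nk, of "x+1" True] ok unfolding b1 b2 ZO_def by auto
  qed
qed

lemma even_even_part: assumes nk: "n = 2*k" and ek: "even k"
  shows "card ZO = 4 \<and> (\<forall>i\<in>{1..n}. \<exists>Z1\<in>ZO. \<exists>Z2\<in>ZO. \<exists>Z3\<in>ZO. \<exists>Z4\<in>ZO. distinct [Z1, Z2, Z3, Z4] \<and>
          zz_occ Z1 (base_edge n i) = 1 \<and> zz_occ Z2 (base_edge n i) = 1 \<and>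
          zz_occ Z3 (base_edge n (nxt n i)) = 1 \<and> zz_occ Z4 (base_edge n (nxt n i)) = 1)"
proof
  have d: "distinct [zz_class (zl 1 x True), zz_class (zl 1 x False), zz_class (zl 1 (x+1) True), zz_class (zl 1 (x+1) False)]" for x
    using cls_ne_par[OF nk, of x "x+1"] cls_ne_par[OF nk, of "x+1" x]
      cls_ne_b[OF nk ek, where b=True and b'=False and s=x] cls_ne_b[OF nk ek, where b=True and b'=False and s="x+1"] by auto
  show "card ZO = 4" unfolding ZO_ek[OF nk ek] using d[of 0] by simp
next
  show "\<forall>i\<in>{1..n}. \<exists>Z1\<in>ZO. \<exists>Z2\<in>ZO. \<exists>Z3\<in>ZO. \<exists>Z4\<in>ZO. distinct [Z1, Z2, Z3, Z4] \<and>
          zz_occ Z1 (base_edge n i) = 1 \<and> zz_occ Z2 (base_edge n i) = 1 \<and>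
          zz_occ Z3 (base_edge n (nxt n i)) = 1 \<and> zz_occ Z4 (base_edge n (nxt n i)) = 1"
  proof
    fix i assume i: "i \<in> {1..n}"
    define x where "x = int i - 1"
    have b1: "base_edge n i = E x" unfolding x_def by (rule base_E[OF i])
    have b2: "base_edge n (nxt n i) = E (x + 1)" unfolding x_def using base_nxt_E[OF i] by simp
    have d: "distinct [zz_class (zl 1 x True), zz_class (zl 1 x False), zz_class (zl 1 (x+1) True), zz_class (zl 1 (x+1) False)]"
      using cls_ne_par[OF nk, of x "x+1"] cls_ne_par[OF nk, of "x+1" x]
        cls_ne_b[OF nk ek, where b=True and b'=False and s=x] cls_ne_b[OF nk ek, where b=True and b'=False and s="x+1"] by auto
    have m: "zz_class (zl 1 s b) \<in> ZO" for s b unfolding ZO_def by blast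
    show "\<exists>Z1\<in>ZO. \<exists>Z2\<in>ZO. \<exists>Z3\<in>ZO. \<exists>Z4\<in>ZO. distinct [Z1, Z2, Z3, Z4] \<and>
          zz_occ Z1 (base_edge n i) = 1 \<and> zz_occ Z2 (base_edge n i) = 1 \<and>
          zz_occ Z3 (base_edge n (nxt n i)) = 1 \<and> zz_occ Z4 (base_edge n (nxt n i)) = 1"
      apply (rule bexI[OF _ m[of x True]], rule bexI[OF _ m[of x False]], rule bexI[OF _ m[of "x+1" True]], rule bexI[OF _ m[of "x+1" False]])
      using d occ_val[OF nk] ek unfolding b1 b2 by simp
  qed
qed

end

theorem mainTheorem10:
  fixes n :: nat
  assumes "n \<ge> 3"
  shows "\<exists>ZO. z_orientation (BP n) ZO \<and>
    (\<forall>f\<in>BP n. typeI_face (BP n) ZO f) \<and>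
    (\<forall>Z\<in>ZO. homogeneous (BP n) ZO Z) \<and>
    (\<forall>e. typeII_edge (BP n) ZO e \<longleftrightarrow> (\<exists>i\<in>{1..n}. e = base_edge n i)) \<and>
    ((\<forall>i\<in>{1..n}. typeII_dir (BP n) ZO (Base i) (Base (nxt n i))) \<or>
     (\<forall>i\<in>{1..n}. typeII_dir (BP n) ZO (Base (nxt n i)) (Base i))) \<and>
    (\<forall>x. typeI_vertex (BP n) ZO x \<longleftrightarrow> x = TopA \<or> x = TopB) \<and>
    (odd n \<longrightarrow>
       (\<exists>Z. ZO = {Z}) \<and>
       (\<forall>i\<in>{1..n}. special_pair (BP n) ZO (base_edge n i) (base_edge n (nxt n i))) \<and>
       (\<forall>c1 c2 t1 t2. special_pair (BP n) ZO c1 c2 \<and> special_pair (BP n) ZO t1 t2 \<and>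
          {c1, c2} \<inter> {t1, t2} = {} \<longrightarrow>
          concordant ZO c1 c2 t1 t2 \<or> concordant ZO c1 c2 t2 t1)) \<and>
    (\<forall>k. n = 2 * k \<and> odd k \<longrightarrow>
       card ZO = 2 \<and>
       (\<forall>i\<in>{1..n}. \<exists>Z1\<in>ZO. \<exists>Z2\<in>ZO. Z1 \<noteq> Z2 \<and>
          zz_occ Z1 (base_edge n i) = 2 \<and> zz_occ Z2 (base_edge n (nxt n i)) = 2)) \<and>
    (\<forall>k. n = 2 * k \<and> even k \<longrightarrow>
       card ZO = 4 \<and>
       (\<forall>i\<in>{1..n}. \<exists>Z1\<in>ZO. \<exists>Z2\<in>ZO. \<exists>Z3\<in>ZO. \<exists>Z4\<in>ZO. distinct [Z1, Z2, Z3, Z4] \<and>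
          zz_occ Z1 (base_edge n i) = 1 \<and> zz_occ Z2 (base_edge n i) = 1 \<and>
          zz_occ Z3 (base_edge n (nxt n i)) = 1 \<and> zz_occ Z4 (base_edge n (nxt n i)) = 1))"
proof -
  interpret bp n using assms by unfold_locales
  show ?thesis
  proof (intro exI[of _ ZO] conjI allI ballI impI)
    show "z_orientation (BP n) ZO" by (rule z_orient)
  next
    fix f assume "f \<in> BP n" then show "typeI_face (BP n) ZO f" by (rule typeI_face)
  next
    fix Z assume "Z \<in> ZO" then show "homogeneous (BP n) ZO Z" by (rule homog)
  next
    fix e show "typeII_edge (BP n) ZO e \<longleftrightarrow> (\<exists>i\<in>{1..n}. e = base_edge n i)" by (rule typeII_base)
  next
    show "(\<forall>i\<in>{1..n}. typeII_dir (BP n) ZO (Base i) (Base (nxt n i))) \<or>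
          (\<forall>i\<in>{1..n}. typeII_dir (BP n) ZO (Base (nxt n i)) (Base i))" by (rule disjI1, rule ballI, rule dir)
  next
    fix x show "typeI_vertex (BP n) ZO x \<longleftrightarrow> x = TopA \<or> x = TopB" by (rule vert)
  next
    assume o: "odd n"
    show "\<exists>Z. ZO = {Z}" by (rule exI, rule ZO_odd[OF o])
  next
    fix i assume "odd n" "i \<in> {1..n}"
    then show "special_pair (BP n) ZO (base_edge n i) (base_edge n (nxt n i))" by (rule special)
  next
    fix c1 c2 t1 t2 assume o: "odd n" and h: "special_pair (BP n) ZO c1 c2 \<and> special_pair (BP n) ZO t1 t2 \<and> {c1, c2} \<inter> {t1, t2} = {}"
    show "concordant ZO c1 c2 t1 t2 \<or> concordant ZO c1 c2 t2 t1"
      by (rule conc[OF o conjunct1[OF h] conjunct1[OF conjunct2[OF h]] conjunct2[OF conjunct2[OF h]]])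
  next
    fix k assume h: "n = 2 * k \<and> odd k"
    show "card ZO = 2" by (rule conjunct1[OF even_odd_part[OF conjunct1[OF h] conjunct2[OF h]]])
  next
    fix k i assume h: "n = 2 * k \<and> odd k" and i: "i \<in> {1..n}"
    show "\<exists>Z1\<in>ZO. \<exists>Z2\<in>ZO. Z1 \<noteq> Z2 \<and>
          zz_occ Z1 (base_edge n i) = 2 \<and> zz_occ Z2 (base_edge n (nxt n i)) = 2"
      by (rule bspec[OF conjunct2[OF even_odd_part[OF conjunct1[OF h] conjunct2[OF h]]] i])
  next
    fix k assume h: "n = 2 * k \<and> even k"
    show "card ZO = 4" by (rule conjunct1[OF even_even_part[OF conjunct1[OF h] conjunct2[OF h]]])
  next
    fix k i assume h: "n = 2 * k \<and> even k" and i: "i \<in> {1..n}"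
    show "\<exists>Z1\<in>ZO. \<exists>Z2\<in>ZO. \<exists>Z3\<in>ZO. \<exists>Z4\<in>ZO. distinct [Z1, Z2, Z3, Z4] \<and>
          zz_occ Z1 (base_edge n i) = 1 \<and> zz_occ Z2 (base_edge n i) = 1 \<and>
          zz_occ Z3 (base_edge n (nxt n i)) = 1 \<and> zz_occ Z4 (base_edge n (nxt n i)) = 1"
      by (rule bspec[OF conjunct2[OF even_even_part[OF conjunct1[OF h] conjunct2[OF h]]] i])
  qed
qed

end
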